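(* Let $\ell\ge1$ and $0\le m\le\ell$ be integers, and let all objects be as defined in the context. For every integer $d\ge1$, the number $\dim\ker(\hat{\mathcal{M}}_{\ell,m})^d-\dim\ker(\hat{\mathcal{M}}_{\ell,m})^{d-1}$ equals the coefficient of $q^{\left\lfloor\frac{m(\ell-m)-(d-1)}{2}\right\rfloor}$ in the $q$-binomial coefficient $\begin{bmatrix}\ell\\ m\end{bmatrix}_q$ (taken to be $0$ if this exponent is negative).
   Context: Let $\mathcal{F}$ be a complex vector space carrying linear operators $\hat b_1,\dots,\hat b_\ell,\hat b_1',\dots,\hat b_\ell'$ satisfying $\{\hat b_j,\hat b_k\}=\{\hat b_j',\hat b_k'\}=0$ and $\{\hat b_j,\hat b_k'\}=\delta_{jk}$ (with $\{A,B\}=AB+BA$), together with a vector $|\mathrm{right}\rangle$ with $\hat b_k|\mathrm{right}\rangle=0$ for all $k$, such that the $2^\ell$ vectors $(\hat b_1')^{\nu_1}\cdots(\hat b_\ell')^{\nu_\ell}|\mathrm{right}\rangle$, $\nu_k\in\{0,1\}$, form a basis of $\mathcal{F}$. Define $\hat{\mathcal{M}}_\ell=\sum_{k=1}^{\ell-1}\hat b_{k+1}'\hat b_k$, $\hat{\mathcal{N}}_\ell=\sum_{k=1}^\ell \hat b_k'\hat b_k$, $\mathcal{V}_{\ell,m}=\{\psi:\hat{\mathcal{N}}_\ell\psi=m\psi\}$, and let $\hat{\mathcal{M}}_{\ell,m}$ be the restriction of $\hat{\mathcal{M}}_\ell$ to $\mathcal{V}_{\ell,m}$, with $(\hat{\mathcal{M}}_{\ell,m})^0$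 the identity. The $q$-binomial coefficient is the polynomial $\begin{bmatrix}n\\ k\end{bmatrix}_q=\frac{[n]_q!}{[k]_q!\,[n-k]_q!}$, where $[j]_q=\frac{1-q^j}{1-q}$ and $[j]_q!=\prod_{i=1}^j[i]_q$ (with $[0]_q!=1$). *)

theory Defs
  imports Complex_Main "HOL-Computational_Algebra.Polynomial"
begin

definition qint :: "nat \<Rightarrow> int poly" where
  "qint j = (\<Sum>i<j. monom 1 i)"

definition qfact :: "nat \<Rightarrow> int poly" where
  "qfact j = (\<Prod>i=1..j. qint i)"

(* q-binomial coefficient [n choose k]_q = [n]_q! / ([k]_q! [n-k]_q!)  (exact polynomial division) *)
definition qbinom :: "nat \<Rightarrow> nat \<Rightarrow> int poly" where
  "qbinom n k = qfact n div (qfact k * qfact (n - k))"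

(* basis vector (b'_1)^{nu_1} ... (b'_l)^{nu_l} |right>, where S = {k. nu_k = 1} *)
definition fock_vec :: "(nat \<Rightarrow> 'v \<Rightarrow> 'v) \<Rightarrow> 'v \<Rightarrow> nat set \<Rightarrow> 'v" where
  "fock_vec b' r S = foldr (\<lambda>k v. b' k v) (sorted_list_of_set S) r"

definition Mop :: "nat \<Rightarrow> (nat \<Rightarrow> 'v \<Rightarrow> 'v) \<Rightarrow> (nat \<Rightarrow> 'v \<Rightarrow> 'v) \<Rightarrow> 'v \<Rightarrow> 'v::comm_monoid_add" where
  "Mop l b b' \<psi> = (\<Sum>k=1..l-1. b' (k+1) (b k \<psi>))"

definition Nop :: "nat \<Rightarrow> (nat \<Rightarrow> 'v \<Rightarrow> 'v) \<Rightarrow> (nat \<Rightarrow> 'v \<Rightarrow> 'v) \<Rightarrow> 'v \<Rightarrow> 'v::comm_monoid_add" where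
  "Nop l b b' \<psi> = (\<Sum>k=1..l. b' k (b k \<psi>))"

definition Vsp :: "(complex \<Rightarrow> 'v \<Rightarrow> 'v) \<Rightarrow> nat \<Rightarrow> nat \<Rightarrow> (nat \<Rightarrow> 'v \<Rightarrow> 'v) \<Rightarrow> (nat \<Rightarrow> 'v \<Rightarrow> 'v) \<Rightarrow> 'v::comm_monoid_add set" where
  "Vsp scale l m b b' = {\<psi>. Nop l b b' \<psi> = scale (of_nat m) \<psi>}"

(* kernel of (M_{l,m})^d, M_{l,m} the restriction of M_l to V_{l,m} (which M_l preserves) *)
definition kerMpow :: "(complex \<Rightarrow> 'v \<Rightarrow> 'v) \<Rightarrow> nat \<Rightarrow> nat \<Rightarrow> (nat \<Rightarrow> 'v \<Rightarrow> 'v) \<Rightarrow> (nat \<Rightarrow> 'v \<Rightarrow> 'v) \<Rightarrow> nat \<Rightarrow> 'v::comm_monoid_add set" where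
  "kerMpow scale l m b b' d = {\<psi> \<in> Vsp scale l m b b'. (Mop l b b' ^^ d) \<psi> = 0}"

end

theory Submission
  imports Defs
begin

context vector_space begin

lemma lin_add: "Vector_Spaces.linear scale scale f \<Longrightarrow> f (x + y) = f x + f y"
  by (simp add: linear_iff_module_hom module_hom.add)
lemma lin_scale: "Vector_Spaces.linear scale scale f \<Longrightarrow> f (c *s x) = c *s f x"
  by (simp add: linear_iff_module_hom module_hom.scale)
lemma lin_0: "Vector_Spaces.linear scale scale f \<Longrightarrow> f 0 = 0"
  by (simp add: linear_iff_module_hom module_hom.zero)
lemma lin_neg: "Vector_Spaces.linear scale scale f \<Longrightarrow> f (- x) = - f x"
  by (simp add: linear_iff_module_hom module_hom.neg)
lemma lin_diff: "Vector_Spaces.linear scale scale f \<Longrightarrow> f (x - y) = f x - f y"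
  by (simp add: linear_iff_module_hom module_hom.diff)
lemma lin_sum: "Vector_Spaces.linear scale scale f \<Longrightarrow> f (sum g A) = (\<Sum>a\<in>A. f (g a))"
  by (simp add: linear_iff_module_hom module_hom.sum)
lemma lin_span_image: "Vector_Spaces.linear scale scale f \<Longrightarrow> f ` span A = span (f ` A)"
  by (simp add: linear_iff_module_hom module_hom.span_image)
lemma lin_comp: "Vector_Spaces.linear scale scale f \<Longrightarrow> Vector_Spaces.linear scale scale g \<Longrightarrow> Vector_Spaces.linear scale scale (\<lambda>x. f (g x))"
  using Vector_Spaces.linear_compose[of scale scale g scale f] by (simp add: o_def)
lemma lin_id: "Vector_Spaces.linear scale scale (\<lambda>x. x)"
  by (simp add: linear_iff_module_hom module_hom_iff vector_space_assms module_axioms)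
lemma lin_pow: "Vector_Spaces.linear scale scale f \<Longrightarrow> Vector_Spaces.linear scale scale (f ^^ n)"
proof (induction n)
  case 0 then show ?case using lin_id by (simp add: id_def)
next
  case (Suc n) then show ?case using lin_comp[of f "f^^n"] by simp
qed

lemma pow_0: "Vector_Spaces.linear scale scale f \<Longrightarrow> (f ^^ n) 0 = 0"
  using lin_pow lin_0 by blast

lemma sl2_comm:
  fixes E F :: "'b \<Rightarrow> 'b" and V :: "int \<Rightarrow> 'b set"
  assumes linE: "Vector_Spaces.linear scale scale E" and linF: "Vector_Spaces.linear scale scale F"
    and EV: "\<And>t x. x \<in> V t \<Longrightarrow> E x \<in> V (t+2)"
    and H: "\<And>t x. x \<in> V t \<Longrightarrow> E (F x) - F (E x) = of_int t *s x"
    and x: "x \<in> V t"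
  shows "(E ^^ Suc k) (F x) = F ((E ^^ Suc k) x) + of_int ((int k + 1) * (t + int k)) *s (E ^^ k) x"
proof -
  have inV: "(E ^^ k) x \<in> V (t + 2 * int k)" for k
  proof (induction k)
    case 0 then show ?case using x by simp
  next
    case (Suc k) then show ?case using EV[OF Suc] by (simp add: algebra_simps)
  qed
  show ?thesis
  proof (induction k)
    case 0 then show ?case using H[OF x] by (simp add: algebra_simps)
  next
    case (Suc k)
    define a where "a = (E ^^ Suc k) x"
    have s1: "(E ^^ Suc (Suc k)) (F x) = E (F a) + of_int ((int k + 1) * (t + int k)) *s a"
      using Suc by (simp add: a_def lin_add[OF linE] lin_scale[OF linE])
    have s2: "E (F a) = F (E a) + of_int (t + 2 * int (Suc k)) *s a"
      using H[OF inV[of "Suc k"]] unfolding a_def by (simp add: algebra_simps)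
    have s3: "of_int (t + 2 * int (Suc k)) *s a + of_int ((int k + 1) * (t + int k)) *s a
       = of_int ((int (Suc k) + 1) * (t + int (Suc k))) *s a"
    proof -
      have "of_int (t + 2 * int (Suc k)) + of_int ((int k + 1) * (t + int k))
        = (of_int ((int (Suc k) + 1) * (t + int (Suc k))) :: 'a)"
        by (simp add: algebra_simps)
      then show ?thesis by (metis scale_left_distrib)
    qed
    have "E a = (E ^^ Suc (Suc k)) x" unfolding a_def by simp
    then show ?case using s1 s2 s3 unfolding a_def[symmetric] by (simp add: add.assoc)
  qed
qed

lemma sl2_inj:
  fixes E F :: "'b \<Rightarrow> 'b" and V :: "int \<Rightarrow> 'b set" and K :: int
  assumes linE: "Vector_Spaces.linear scale scale E" and linF: "Vector_Spaces.linear scale scale F"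
    and EV: "\<And>t x. x \<in> V t \<Longrightarrow> E x \<in> V (t+2)"
    and FV: "\<And>t x. x \<in> V t \<Longrightarrow> F x \<in> V (t-2)"
    and H: "\<And>t x. x \<in> V t \<Longrightarrow> E (F x) - F (E x) = of_int t *s x"
    and bot: "\<And>t x. t < -K \<Longrightarrow> x \<in> V t \<Longrightarrow> x = 0"
    and char0: "\<And>z::int. (of_int z :: 'a) = 0 \<Longrightarrow> z = 0"
  shows "x \<in> V t \<Longrightarrow> (E ^^ k) x = 0 \<Longrightarrow> t + int k \<le> 0 \<Longrightarrow> x = 0"
proof -
  have main: "\<forall>t k x. t + K < int n \<longrightarrow> x \<in> V t \<longrightarrow> (E ^^ k) x = 0 \<longrightarrow> t + int k \<le> 0 \<longrightarrow> x = 0" for n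
  proof (induction n)
    case 0 then show ?case using bot by force
  next
    case (Suc n)
    show ?case
    proof (intro allI impI)
      fix t k x assume lt: "t + K < int (Suc n)" and x: "x \<in> V t" and Ek: "(E ^^ k) x = 0"
        and le: "t + int k \<le> 0"
      show "x = 0"
      proof (cases "t < -K")
        case True then show ?thesis using bot x by blast
      next
        case False
        have "(E ^^ Suc k) (F x) = 0"
          using sl2_comm[OF linE linF EV H x, of k] Ek lin_0[OF linE] lin_0[OF linF] by simp
        then have F0: "F x = 0"
          using Suc.IH[rule_format, of "t - 2" "F x" "Suc k"] FV[OF x] lt le by simp
        have "\<forall>i\<le>k. (E ^^ (k - i)) x = 0"
        proof (intro allI impI)
          fix i assume "i \<le> k"
          then show "(E ^^ (k - i)) x = 0"
          proof (induction i)
            case 0 then show ?case using Ek by simp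
          next
            case (Suc i)
            have kk: "k - i = Suc (k - Suc i)" using Suc.prems by simp
            have "(E ^^ (k - i)) x = 0" using Suc by simp
            then have "(E ^^ Suc (k - Suc i)) x = 0" by (simp only: kk)
            then have e: "E ((E ^^ (k - Suc i)) x) = 0" by simp
            have "0 = F ((E ^^ Suc (k - Suc i)) x) + of_int ((int (k - Suc i) + 1) * (t + int (k - Suc i))) *s (E ^^ (k - Suc i)) x"
              using sl2_comm[OF linE linF EV H x, of "k - Suc i"] F0 by (simp add: pow_0[OF linE] lin_0[OF linE])
            then have "of_int ((int (k - Suc i) + 1) * (t + int (k - Suc i))) *s (E ^^ (k - Suc i)) x = 0"
              using e lin_0[OF linF] by simp
            moreover have "(int (k - Suc i) + 1) * (t + int (k - Suc i)) \<noteq> 0"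
              using Suc.prems le by simp
            then have "(of_int ((int (k - Suc i) + 1) * (t + int (k - Suc i))) :: 'a) \<noteq> 0"
              using char0 by blast
            ultimately show ?case using scale_eq_0_iff by blast
          qed
        qed
        then show ?thesis by (metis diff_self_eq_0 funpow_0 order_refl)
      qed
    qed
  qed
  show "x \<in> V t \<Longrightarrow> (E ^^ k) x = 0 \<Longrightarrow> t + int k \<le> 0 \<Longrightarrow> x = 0"
  proof -
    assume a: "x \<in> V t" "(E ^^ k) x = 0" "t + int k \<le> 0"
    have "t + K < int (nat (t + K + 1))" by linarith
    from main[of "nat (t + K + 1)", rule_format, OF this a(1) a(2) a(3)] show "x = 0" .
  qed
qed

end

context finite_dimensional_vector_space begin

lemma span_disj:
  assumes X: "independent X" and BX: "B \<subseteq> X" and DX: "D \<subseteq> X" and BD: "B \<inter> D = {}"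
  shows "span B \<inter> span D \<subseteq> {0}"
proof -
  have fX: "finite X" using X finiteI_independent by blast
  have fB: "finite B" "finite D" using fX BX DX finite_subset by auto
  have iB: "independent B" "independent D" "independent (B \<union> D)"
    using X BX DX independent_mono by auto
  have "dim {x + y |x y. x \<in> span B \<and> y \<in> span D} + dim (span B \<inter> span D) = dim (span B) + dim (span D)"
    using dim_sums_Int[of "span B" "span D"] by (simp add: subspace_span)
  moreover have "{x + y |x y. x \<in> span B \<and> y \<in> span D} = span (B \<union> D)"
    by (simp add: span_Un)
  moreover have "dim (span (B \<union> D)) = card B + card D"
    using dim_span_eq_card_independent[OF iB(3)] card_Un_disjoint[OF fB BD] by simp
  moreover have "dim (span B) = card B" "dim (span D) = card D"
    using dim_span_eq_card_independent iB by auto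
  ultimately have "dim (span B \<inter> span D) = 0" by simp
  then show ?thesis by simp
qed

lemma rank_nullity:
  assumes S: "subspace S" and f: "Vector_Spaces.linear scale scale f"
  shows "dim S = dim {x \<in> S. f x = 0} + dim (f ` S)"
proof -
  let ?K = "{x \<in> S. f x = 0}"
  obtain B where B: "B \<subseteq> ?K" "independent B" "?K \<subseteq> span B" "card B = dim ?K"
    using basis_exists by blast
  obtain C where C: "B \<subseteq> C" "C \<subseteq> S" "independent C" "S \<subseteq> span C"
    using maximal_independent_subset_extend[of B S] B by auto
  have fC: "finite C" using C finiteI_independent by blast
  have cardC: "card C = dim S" using basis_card_eq_dim[OF C(2) C(4) C(3)] .
  have fB0: "\<And>c. c \<in> B \<Longrightarrow> f c = 0" using B by auto
  have dis: "span B \<inter> span (C - B) \<subseteq> {0}"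
    using span_disj[OF C(3) C(1), of "C - B"] by auto
  have "?K = S \<inter> {x. f x = 0}" by auto
  moreover have "subspace {x. f x = 0}" using f by (auto simp: subspace_def lin_add lin_scale lin_0)
  ultimately have subK: "subspace ?K" using subspace_inter[OF S] by simp
  have fh: "module_hom scale scale f" using f by (simp add: linear_iff_module_hom)
  have inj: "inj_on f (span (C - B))"
  proof (rule module_hom.inj_on_iff_eq_0[OF fh subspace_span, THEN iffD2], intro ballI impI)
    fix x assume x: "x \<in> span (C - B)" and fx: "f x = 0"
    have "x \<in> S" using x C span_mono[of "C - B" C] span_minimal[OF C(2) S] by blast
    then have "x \<in> span B" using B fx by auto
    then show "x = 0" using dis x by auto
  qed
  have indep: "independent (f ` (C - B))"
    using module_hom.independent_injective_image[OF fh _ inj] C independent_mono by blast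
  have card_img: "card (f ` (C - B)) = card (C - B)"
    using card_image inj_on_subset[OF inj span_superset] by blast
  have span_img: "f ` S \<subseteq> span (f ` (C - B))"
  proof
    fix y assume "y \<in> f ` S"
    then obtain x where x: "x \<in> S" "y = f x" by auto
    then have "x \<in> span C" using C by auto
    then have "f x \<in> span (f ` C)" using lin_span_image[OF f] by auto
    moreover have "f ` C \<subseteq> span (f ` (C - B))"
    proof
      fix z assume "z \<in> f ` C"
      then obtain c where c: "c \<in> C" "z = f c" by auto
      show "z \<in> span (f ` (C - B))"
      proof (cases "c \<in> B")
        case True then show ?thesis using c fB0 span_zero by simp
      next
        case False then show ?thesis using c by (simp add: span_base)
      qed
    qed
    ultimately show "y \<in> span (f ` (C - B))" using x span_mono span_span
      by (metis span_minimal subspace_span subsetD)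
  qed
  have sub_img: "f ` (C - B) \<subseteq> f ` S" using C by auto
  have "dim (f ` S) = card (f ` (C - B))"
    using basis_card_eq_dim[OF sub_img span_img indep] by simp
  then have "dim (f ` S) = card C - card B"
    using card_img card_Diff_subset[of B C] C(1) fC finite_subset by auto
  moreover have "card B \<le> card C" using C(1) fC card_mono by blast
  ultimately show ?thesis using B(4) cardC by simp
qed

lemma dim_direct_sum:
  assumes I: "finite I" and X: "independent X"
    and beta: "\<And>i. i \<in> I \<Longrightarrow> \<beta> i \<subseteq> X"
    and disj: "\<And>i j. i \<in> I \<Longrightarrow> j \<in> I \<Longrightarrow> i \<noteq> j \<Longrightarrow> \<beta> i \<inter> \<beta> j = {}"
    and W: "\<And>i. i \<in> I \<Longrightarrow> subspace (W i) \<and> W i \<subseteq> span (\<beta> i)"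
  shows "dim (span (\<Union>i\<in>I. W i)) = (\<Sum>i\<in>I. dim (W i))"
  using I beta disj W
proof (induction I rule: finite_induct)
  case empty then show ?case by simp
next
  case (insert i I)
  let ?T = "span (\<Union>j\<in>I. W j)"
  have IH: "dim ?T = (\<Sum>j\<in>I. dim (W j))"
    using insert by (meson insertCI)
  have Wi: "subspace (W i)" "W i \<subseteq> span (\<beta> i)" using insert by auto
  have "span (\<Union>j\<in>insert i I. W j) = span (W i \<union> (\<Union>j\<in>I. W j))" by simp
  also have "\<dots> = {x + y |x y. x \<in> span (W i) \<and> y \<in> ?T}" by (simp add: span_Un)
  also have "\<dots> = {x + y |x y. x \<in> W i \<and> y \<in> ?T}"
  proof -
    have e: "span (W i) = W i" using Wi(1) span_eq_iff by blast
    show ?thesis by (simp only: e)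
  qed
  finally have eq: "span (\<Union>j\<in>insert i I. W j) = {x + y |x y. x \<in> W i \<and> y \<in> ?T}" .
  have T: "?T \<subseteq> span (\<Union>j\<in>I. \<beta> j)"
  proof (rule span_minimal[OF _ subspace_span], rule UN_least)
    fix j assume j: "j \<in> I"
    have "W j \<subseteq> span (\<beta> j)" using insert j by auto
    also have "\<dots> \<subseteq> span (\<Union>j\<in>I. \<beta> j)" using j by (intro span_mono) auto
    finally show "W j \<subseteq> span (\<Union>j\<in>I. \<beta> j)" .
  qed
  have "span (\<beta> i) \<inter> span (\<Union>j\<in>I. \<beta> j) \<subseteq> {0}"
  proof (rule span_disj[OF X])
    show "\<beta> i \<subseteq> X" using insert by auto
    show "(\<Union>j\<in>I. \<beta> j) \<subseteq> X" using insert by auto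
    show "\<beta> i \<inter> (\<Union>j\<in>I. \<beta> j) = {}"
    proof (rule equals0I)
      fix z assume "z \<in> \<beta> i \<inter> (\<Union>j\<in>I. \<beta> j)"
      then obtain j where j: "j \<in> I" "z \<in> \<beta> i" "z \<in> \<beta> j" by blast
      have "i \<noteq> j" using insert.hyps(2) j(1) by blast
      then have "\<beta> i \<inter> \<beta> j = {}" using insert.prems(2)[of i j] j(1) by blast
      then show False using j by blast
    qed
  qed
  then have "W i \<inter> ?T \<subseteq> {0}" using Wi(2) T by blast
  then have d0: "dim (W i \<inter> ?T) = 0" by simp
  have "dim (span (\<Union>j\<in>insert i I. W j)) = dim (W i) + dim ?T"
    using dim_sums_Int[OF Wi(1) subspace_span, of "\<Union>j\<in>I. W j"] eq d0 by simp
  then show ?case using IH insert.hyps by simp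
qed

end

definition subs :: "nat \<Rightarrow> nat \<Rightarrow> nat set set" where
  "subs n k = {S. S \<subseteq> {1..n} \<and> card S = k}"

definition tri :: "nat \<Rightarrow> nat" where "tri k = k * (k + 1) div 2"

lemma tri_Suc: "tri (Suc k) = tri k + Suc k"
  unfolding tri_def by (induction k) auto

lemma finite_subs[simp]: "finite (subs n k)"
  unfolding subs_def by (rule finite_subset[of _ "Pow {1..n}"]) auto

lemma sum_lower:
  "finite S \<Longrightarrow> 0 \<notin> S \<Longrightarrow> card S = k \<Longrightarrow> tri k \<le> \<Sum> S"
proof (induction k arbitrary: S)
  case 0 then show ?case by (simp add: tri_def)
next
  case (Suc k)
  have ne: "S \<noteq> {}" using Suc.prems(3) by auto
  define M where "M = Max S"
  have MS: "M \<in> S" using Suc.prems ne M_def by simp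
  have "S \<subseteq> {1..M}"
  proof
    fix x assume x: "x \<in> S"
    then have "x \<le> M" using Max_ge Suc.prems(1) M_def by auto
    moreover have "x \<noteq> 0" proof assume "x = 0" then show False using x Suc.prems(2) by simp qed
    ultimately show "x \<in> {1..M}" by simp
  qed
  then have "card S \<le> M" using card_mono[of "{1..M}" S] by simp
  then have kM: "Suc k \<le> M" using Suc.prems by simp
  have c: "card (S - {M}) = k" using Suc.prems MS by simp
  have "tri k \<le> \<Sum> (S - {M})" using Suc.IH[of "S - {M}"] Suc.prems c by simp
  moreover have "\<Sum> S = M + \<Sum> (S - {M})" using Suc.prems MS by (simp add: sum.remove)
  ultimately show ?case using kM tri_Suc[of k] by simp
qed

definition G :: "nat \<Rightarrow> nat \<Rightarrow> int poly" where
  "G n k = (\<Sum>S\<in>subs n k. monom 1 (\<Sum> S - tri k))"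

lemma coeff_G: "coeff (G n k) j = int (card {S \<in> subs n k. \<Sum> S = j + tri k})"
proof -
  have "coeff (G n k) j = (\<Sum>S\<in>subs n k. if \<Sum> S - tri k = j then 1 else 0)"
    unfolding G_def by (simp add: coeff_sum coeff_monom eq_commute)
  also have "\<dots> = (\<Sum>S\<in>subs n k. if \<Sum> S = j + tri k then 1 else 0)"
  proof (rule sum.cong[OF refl])
    fix S assume "S \<in> subs n k"
    then have S: "S \<subseteq> {1..n}" "card S = k" unfolding subs_def by auto
    then have "finite S" using finite_subset by blast
    moreover have "0 \<notin> S" using S by auto
    ultimately have "tri k \<le> \<Sum> S" using sum_lower[of S k] S by auto
    then show "(if \<Sum> S - tri k = j then 1 else 0) = (if \<Sum> S = j + tri k then (1::int) else 0)"
      by auto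
  qed
  also have "\<dots> = int (card {S \<in> subs n k. \<Sum> S = j + tri k})"
  proof -
    have "subs n k \<inter> {S. \<Sum> S = j + tri k} = {S \<in> subs n k. \<Sum> S = j + tri k}" by auto
    then show ?thesis by (simp add: sum.If_cases)
  qed
  finally show ?thesis .
qed

lemma subs_0: "subs n 0 = {{}}"
proof -
  have *: "S = {}" if "S \<subseteq> {1..n}" "card S = 0" for S
  proof -
    have "finite S" by (rule finite_subset[OF that(1)]) simp
    then show ?thesis using that(2) by simp
  qed
  show ?thesis unfolding subs_def
  proof (intro equalityI subsetI)
    fix S assume "S \<in> {S. S \<subseteq> {1..n} \<and> card S = 0}"
    then show "S \<in> {{}}" using *[of S] by blast
  qed simp
qed

lemma subs_big: "n < k \<Longrightarrow> subs n k = {}"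
proof -
  assume nk: "n < k"
  have False if "S \<subseteq> {1..n}" "card S = k" for S
    using card_mono[OF _ that(1)] that(2) nk by simp
  then show ?thesis unfolding subs_def by blast
qed

lemma G_0[simp]: "G n 0 = 1"
  by (simp add: G_def subs_0 tri_def)

lemma G_big: "n < k \<Longrightarrow> G n k = 0"
  by (simp add: G_def subs_big)

lemma subs_Suc: "subs (Suc n) (Suc k) = subs n (Suc k) \<union> insert (Suc n) ` subs n k"
proof
  show "subs (Suc n) (Suc k) \<subseteq> subs n (Suc k) \<union> insert (Suc n) ` subs n k"
  proof
    fix S assume S: "S \<in> subs (Suc n) (Suc k)"
    show "S \<in> subs n (Suc k) \<union> insert (Suc n) ` subs n k"
    proof (cases "Suc n \<in> S")
      case True
      have fin: "finite S" using S unfolding subs_def by (auto intro: finite_subset)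
      have "S - {Suc n} \<in> subs n k" using S True fin unfolding subs_def by (auto simp: le_Suc_eq)
      moreover have "S = insert (Suc n) (S - {Suc n})" using True by auto
      ultimately show ?thesis by blast
    next
      case False
      then have "S \<in> subs n (Suc k)" using S unfolding subs_def by (auto simp: le_Suc_eq)
      then show ?thesis by blast
    qed
  qed
next
  show "subs n (Suc k) \<union> insert (Suc n) ` subs n k \<subseteq> subs (Suc n) (Suc k)"
  proof
    fix S assume "S \<in> subs n (Suc k) \<union> insert (Suc n) ` subs n k"
    then show "S \<in> subs (Suc n) (Suc k)"
    proof
      assume "S \<in> subs n (Suc k)" then show ?thesis unfolding subs_def by auto
    next
      assume "S \<in> insert (Suc n) ` subs n k"
      then obtain T where T: "T \<in> subs n k" "S = insert (Suc n) T" by auto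
      have fin: "finite T" using T unfolding subs_def by (auto intro: finite_subset)
      have "Suc n \<notin> T" using T unfolding subs_def by auto
      then show ?thesis using T fin unfolding subs_def by auto
    qed
  qed
qed

lemma G_Suc_aux:
  assumes S: "S \<in> subs n k"
  shows "monom (1::int) (\<Sum> (insert (Suc n) S) - tri (Suc k)) = monom 1 (n - k) * monom 1 (\<Sum> S - tri k)"
proof -
    have fin: "finite S" and sub: "S \<subseteq> {1..n}" and cS: "card S = k"
      using S unfolding subs_def by (auto intro: finite_subset)
    have "Suc n \<notin> S" using sub by auto
    then have s: "\<Sum> (insert (Suc n) S) = Suc n + \<Sum> S" using fin by simp
    have "0 \<notin> S" using sub by auto
    then have lo: "tri k \<le> \<Sum> S" using sum_lower[OF fin _ cS] by blast
    have "card S \<le> card {1..n}" by (rule card_mono) (use sub in auto)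
    then have kn: "k \<le> n" using cS by simp
    have "\<Sum> (insert (Suc n) S) - tri (Suc k) = (n - k) + (\<Sum> S - tri k)"
      unfolding s tri_Suc using lo kn by arith
    then show ?thesis by (simp add: mult_monom)
qed

lemma G_Suc: "G (Suc n) (Suc k) = G n (Suc k) + monom 1 (n - k) * G n k"
proof -
  have disj: "subs n (Suc k) \<inter> insert (Suc n) ` subs n k = {}"
    unfolding subs_def by auto
  have inj: "inj_on (insert (Suc n)) (subs n k)"
  proof
    fix S T assume "S \<in> subs n k" "T \<in> subs n k" "insert (Suc n) S = insert (Suc n) T"
    moreover have "Suc n \<notin> S" "Suc n \<notin> T" using calculation unfolding subs_def by auto
    ultimately show "S = T" using insert_ident by metis
  qed
  have "G (Suc n) (Suc k) = (\<Sum>S\<in>subs n (Suc k). monom 1 (\<Sum> S - tri (Suc k)))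
        + (\<Sum>S\<in>insert (Suc n) ` subs n k. monom 1 (\<Sum> S - tri (Suc k)))"
    unfolding G_def subs_Suc by (rule sum.union_disjoint) (use disj in auto)
  also have "(\<Sum>S\<in>insert (Suc n) ` subs n k. monom (1::int) (\<Sum> S - tri (Suc k)))
      = (\<Sum>S\<in>subs n k. monom 1 (\<Sum> (insert (Suc n) S) - tri (Suc k)))"
    by (rule sum.reindex[OF inj, unfolded comp_def])
  also have "\<dots> = (\<Sum>S\<in>subs n k. monom 1 (n - k) * monom 1 (\<Sum> S - tri k))"
    by (rule sum.cong[OF refl]) (erule G_Suc_aux)
  also have "\<dots> = monom 1 (n - k) * G n k" unfolding G_def by (rule sum_distrib_left[symmetric])
  finally have eq: "G (Suc n) (Suc k) = (\<Sum>S\<in>subs n (Suc k). monom 1 (\<Sum> S - tri (Suc k))) + monom 1 (n - k) * G n k" .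
  have "(\<Sum>S\<in>subs n (Suc k). monom 1 (\<Sum> S - tri (Suc k))) = G n (Suc k)" unfolding G_def ..
  then show ?thesis using eq by simp
qed

lemma qint_add: "qint (a + b) = qint a + monom 1 a * qint b"
proof (induction b)
  case 0 then show ?case by (simp add: qint_def)
next
  case (Suc b)
  have "qint (a + Suc b) = qint (a + b) + monom 1 (a + b)" by (simp add: qint_def)
  also have "\<dots> = qint a + monom 1 a * (qint b + monom 1 b)"
    using Suc by (simp add: mult_monom algebra_simps)
  also have "qint b + monom 1 b = qint (Suc b)" by (simp add: qint_def)
  finally show ?case .
qed

lemma qint_0[simp]: "qint 0 = 0" by (simp add: qint_def)

lemma qfact_0[simp]: "qfact 0 = 1" by (simp add: qfact_def)

lemma qfact_Suc: "qfact (Suc n) = qfact n * qint (Suc n)"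
  unfolding qfact_def by (simp add: prod.nat_ivl_Suc' mult.commute)

lemma qint_nz: "0 < i \<Longrightarrow> qint i \<noteq> 0"
proof -
  assume "0 < i"
  then have "coeff (qint i) 0 = 1" by (simp add: qint_def coeff_sum coeff_monom sum.delta)
  then show ?thesis by auto
qed

lemma qfact_nz: "qfact n \<noteq> 0"
  by (induction n) (simp_all add: qfact_Suc qint_nz)

lemma G_prod: "k \<le> n \<Longrightarrow> G n k * (qfact k * qfact (n - k)) = qfact n"
proof (induction n arbitrary: k)
  case 0 then show ?case by simp
next
  case (Suc n)
  show ?case
  proof (cases k)
    case 0 then show ?thesis by simp
  next
    case (Suc k')
    have A: "G n (Suc k') * (qfact (Suc k') * qfact (n - k')) = qfact n * qint (n - k')"
    proof (cases "Suc k' \<le> n")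
      case True
      have "n - k' = Suc (n - Suc k')" using True by simp
      then have "qfact (n - k') = qfact (n - Suc k') * qint (n - k')" by (simp add: qfact_Suc)
      then show ?thesis using Suc.IH[OF True] by (simp add: algebra_simps)
    next
      case False
      then have "n = k'" using Suc.prems \<open>k = Suc k'\<close> by simp
      then show ?thesis by (simp add: G_big)
    qed
    have B: "G n k' * (qfact k' * qfact (n - k')) = qfact n"
      using Suc.IH[of k'] Suc.prems \<open>k = Suc k'\<close> by simp
    have "G (Suc n) k * (qfact k * qfact (Suc n - k))
        = G n (Suc k') * (qfact (Suc k') * qfact (n - k'))
          + monom 1 (n - k') * (G n k' * (qfact k' * qfact (n - k'))) * qint (Suc k')"
      using \<open>k = Suc k'\<close> by (simp add: G_Suc qfact_Suc algebra_simps)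
    also have "\<dots> = qfact n * (qint (n - k') + monom 1 (n - k') * qint (Suc k'))"
      using A B by (simp add: algebra_simps)
    also have "qint (n - k') + monom 1 (n - k') * qint (Suc k') = qint (Suc n)"
      using qint_add[of "n - k'" "Suc k'"] Suc.prems \<open>k = Suc k'\<close> by simp
    finally show ?thesis by (simp add: qfact_Suc)
  qed
qed

lemma qbinom_G: "k \<le> n \<Longrightarrow> qbinom n k = G n k"
proof -
  assume "k \<le> n"
  have nz: "qfact k * qfact (n - k) \<noteq> 0" using qfact_nz by simp
  show ?thesis unfolding qbinom_def using G_prod[OF \<open>k \<le> n\<close>] nonzero_mult_div_cancel_right[OF nz, of "G n k"]
    by simp
qed

lemma coeff_qbinom: "k \<le> n \<Longrightarrow> coeff (qbinom n k) j = int (card {S \<in> subs n k. \<Sum> S = j + tri k})"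
proof -
  assume "k \<le> n"
  then have "qbinom n k = G n k" by (rule qbinom_G)
  then show ?thesis using coeff_G[of n k j] by simp
qed

definition sg :: "nat \<Rightarrow> nat set \<Rightarrow> complex" where
  "sg k S = (-1) ^ card {i \<in> S. i < k}"

lemma sg_sq: "sg k S * sg k S = 1"
  unfolding sg_def by (simp add: power_mult_distrib[symmetric])

lemma sg_insert_less: "finite T \<Longrightarrow> a \<notin> T \<Longrightarrow> a < k \<Longrightarrow> sg k (insert a T) = - sg k T"
proof -
  assume fT: "finite T" and aT: "a \<notin> T" and ak: "a < k"
  have "{i \<in> insert a T. i < k} = insert a {i \<in> T. i < k}" using ak by auto
  moreover have "card (insert a {i \<in> T. i < k}) = Suc (card {i \<in> T. i < k})"
    using fT aT by simp
  ultimately show ?thesis unfolding sg_def by simp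
qed

lemma sg_empty_below:
  assumes "\<forall>x\<in>S. k \<le> x" shows "sg k S = 1"
proof -
  have "{i \<in> S. i < k} = {}" using assms by auto
  then have "card {i \<in> S. i < k} = 0" by (simp only: card.empty)
  then show ?thesis unfolding sg_def by (simp only: power_0)
qed

locale fock = finite_dimensional_vector_space scale "fock_vec b' r ` Pow {1..l}"
  for scale :: "complex \<Rightarrow> 'v::ab_group_add \<Rightarrow> 'v" (infixr \<open>*s\<close> 75)
    and b b' :: "nat \<Rightarrow> 'v \<Rightarrow> 'v" and r :: 'v and l :: nat +
  assumes lin_b: "\<And>k. k \<in> {1..l} \<Longrightarrow> Vector_Spaces.linear scale scale (b k)"
    and lin_b': "\<And>k. k \<in> {1..l} \<Longrightarrow> Vector_Spaces.linear scale scale (b' k)"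
    and car_bb: "\<And>j k \<psi>. j \<in> {1..l} \<Longrightarrow> k \<in> {1..l} \<Longrightarrow> b j (b k \<psi>) + b k (b j \<psi>) = 0"
    and car_b'b': "\<And>j k \<psi>. j \<in> {1..l} \<Longrightarrow> k \<in> {1..l} \<Longrightarrow> b' j (b' k \<psi>) + b' k (b' j \<psi>) = 0"
    and car_bb': "\<And>j k \<psi>. j \<in> {1..l} \<Longrightarrow> k \<in> {1..l} \<Longrightarrow>
                    b j (b' k \<psi>) + b' k (b j \<psi>) = (if j = k then \<psi> else 0)"
    and vac: "\<And>k. k \<in> {1..l} \<Longrightarrow> b k r = 0"
    and basis_inj: "inj_on (fock_vec b' r) (Pow {1..l})"
begin

abbreviation fk where "fk \<equiv> fock_vec b' r"

lemma fk_empty: "fk {} = r"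
  by (simp add: fock_vec_def)

lemma fk_min: "finite T \<Longrightarrow> \<forall>x\<in>T. a < x \<Longrightarrow> fk (insert a T) = b' a (fk T)"
proof -
  assume fT: "finite T" and aT: "\<forall>x\<in>T. a < x"
  have "Min (insert a T) = a" using fT aT by (auto intro: Min_eqI less_imp_le)
  moreover have "insert a T - {a} = T" using aT by auto
  ultimately have "sorted_list_of_set (insert a T) = a # sorted_list_of_set T"
    using sorted_list_of_set_nonempty[of "insert a T"] fT by simp
  then show ?thesis by (simp add: fock_vec_def)
qed

lemma self_zero: fixes x :: 'v assumes "x + x = 0" shows "x = 0"
proof -
  have "(1 + 1) *s x = x + x" by (simp only: scale_left_distrib scale_one)
  then have "(1 + 1) *s x = 0" using assms by simp
  moreover have "(1 + 1 :: complex) \<noteq> 0" by simp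
  ultimately show ?thesis using scale_eq_0_iff by blast
qed

lemma b'b'_same: "k \<in> {1..l} \<Longrightarrow> b' k (b' k \<psi>) = 0"
  using car_b'b'[of k k \<psi>] self_zero by blast

lemma b'b'_anti: "j \<in> {1..l} \<Longrightarrow> k \<in> {1..l} \<Longrightarrow> b' j (b' k \<psi>) = - b' k (b' j \<psi>)"
  using car_b'b'[of j k \<psi>] by (simp add: eq_neg_iff_add_eq_0)

lemma bb_anti: "j \<in> {1..l} \<Longrightarrow> k \<in> {1..l} \<Longrightarrow> b j (b k \<psi>) = - b k (b j \<psi>)"
  using car_bb[of j k \<psi>] by (simp add: eq_neg_iff_add_eq_0)

lemma bb'_swap: "j \<in> {1..l} \<Longrightarrow> k \<in> {1..l} \<Longrightarrow> b j (b' k \<psi>) = (if j = k then \<psi> else 0) - b' k (b j \<psi>)"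
  using car_bb'[of j k \<psi>] by (simp add: eq_diff_eq)

lemma fk_act_aux:
  "S \<subseteq> {1..l} \<Longrightarrow> card S = n \<Longrightarrow> \<forall>k\<in>{1..l}.
     b' k (fk S) = (if k \<in> S then 0 else sg k S *s fk (insert k S)) \<and>
     b k (fk S) = (if k \<in> S then sg k S *s fk (S - {k}) else 0)"
proof (induction n arbitrary: S)
  case 0
  then have "S = {}" using finite_subset[OF "0.prems"(1)] by auto
  then show ?case using fk_min[of "{}"] vac by (simp add: fk_empty sg_def)
next
  case (Suc n)
  have fS: "finite S" using finite_subset[OF Suc.prems(1)] by simp
  then have ne: "S \<noteq> {}" using Suc.prems(2) by auto
  define a where "a = Min S"
  define T where "T = S - {a}"
  have aS: "a \<in> S" using fS ne a_def by simp
  have fT: "finite T" using fS T_def by simp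
  have aT: "\<forall>x\<in>T. a < x" using fS a_def T_def by (auto simp: order.not_eq_order_implies_strict)
  have aT': "a \<notin> T" using T_def by simp
  have SaT: "S = insert a T" using aS T_def by auto
  have cT: "card T = n" using Suc.prems(2) aS fS T_def by simp
  have Tsub: "T \<subseteq> {1..l}" using Suc.prems(1) T_def by auto
  have al: "a \<in> {1..l}" using aS Suc.prems(1) by auto
  have fkS: "fk S = b' a (fk T)" using fk_min[OF fT aT] SaT by simp
  have IH: "\<forall>k\<in>{1..l}. b' k (fk T) = (if k \<in> T then 0 else sg k T *s fk (insert k T)) \<and>
     b k (fk T) = (if k \<in> T then sg k T *s fk (T - {k}) else 0)"
    using Suc.IH[OF Tsub cT] .
  have lina: "Vector_Spaces.linear scale scale (b' a)" using lin_b' al by simp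
  show ?case
  proof
    fix k assume kl: "k \<in> {1..l}"
    have IHk: "b' k (fk T) = (if k \<in> T then 0 else sg k T *s fk (insert k T))"
      "b k (fk T) = (if k \<in> T then sg k T *s fk (T - {k}) else 0)" using IH kl by auto
    have P1: "b' k (fk S) = (if k \<in> S then 0 else sg k S *s fk (insert k S))"
    proof (cases "k = a")
      case True
      then show ?thesis using fkS b'b'_same[OF al] aS by simp
    next
      case False
      show ?thesis
      proof (cases "k < a")
        case True
        then have kS: "k \<notin> S" using a_def fS ne by auto
        have "\<forall>x\<in>S. k < x" using True a_def fS ne by auto
        then have "fk (insert k S) = b' k (fk S)" using fk_min[OF fS] by simp
        moreover have "sg k S = 1" using True a_def fS ne by (auto intro!: sg_empty_below)
        ultimately show ?thesis using kS by simp
      next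
        case False
        then have ak: "a < k" using \<open>k \<noteq> a\<close> by simp
        have anti: "b' k (fk S) = - b' a (b' k (fk T))" using fkS b'b'_anti[OF kl al] by simp
        show ?thesis
        proof (cases "k \<in> T")
          case True
          then show ?thesis using anti IHk(1) lin_0[OF lina] SaT by simp
        next
          case False
          have kS: "k \<notin> S" using False SaT \<open>k \<noteq> a\<close> by simp
          have "\<forall>x\<in>insert k T. a < x" using aT ak by simp
          then have e1: "b' a (fk (insert k T)) = fk (insert a (insert k T))"
            using fk_min[of "insert k T" a] fT by simp
          have e2: "insert a (insert k T) = insert k S" using SaT by auto
          have e3: "sg k S = - sg k T" using SaT sg_insert_less[OF fT aT' ak] by simp
          show ?thesis using anti IHk(1) False kS e1 e2 e3 lin_scale[OF lina] by simp
        qed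
      qed
    qed
    have P2: "b k (fk S) = (if k \<in> S then sg k S *s fk (S - {k}) else 0)"
    proof -
      have sw: "b k (fk S) = (if k = a then fk T else 0) - b' a (b k (fk T))"
        using fkS bb'_swap[OF kl al] by simp
      show ?thesis
      proof (cases "k = a")
        case True
        have "sg a S = 1" using a_def fS ne by (auto intro!: sg_empty_below)
        moreover have "b a (fk T) = 0" using IH al aT' by auto
        ultimately show ?thesis using sw True aS T_def lin_0[OF lina] by simp
      next
        case False
        show ?thesis
        proof (cases "k \<in> T")
          case True
          have ak: "a < k" using True aT by simp
          have "\<forall>x\<in>T - {k}. a < x" using aT by simp
          then have e1: "b' a (fk (T - {k})) = fk (insert a (T - {k}))"
            using fk_min[of "T - {k}" a] fT by simp
          have e2: "insert a (T - {k}) = S - {k}" using SaT False by auto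
          have e3: "sg k S = - sg k T" using SaT sg_insert_less[OF fT aT' ak] by simp
          have kS: "k \<in> S" using True SaT by simp
          show ?thesis using sw False IHk(2) True e1 e2 e3 kS lin_scale[OF lina] by simp
        next
          case False
          then have "k \<notin> S" using SaT \<open>k \<noteq> a\<close> by simp
          then show ?thesis using sw \<open>k \<noteq> a\<close> IHk(2) False lin_0[OF lina] by simp
        qed
      qed
    qed
    show "b' k (fk S) = (if k \<in> S then 0 else sg k S *s fk (insert k S)) \<and>
          b k (fk S) = (if k \<in> S then sg k S *s fk (S - {k}) else 0)"
      using P1 P2 by simp
  qed
qed

lemma b'_fk: "S \<subseteq> {1..l} \<Longrightarrow> k \<in> {1..l} \<Longrightarrow> b' k (fk S) = (if k \<in> S then 0 else sg k S *s fk (insert k S))"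
  using fk_act_aux by blast

lemma b_fk: "S \<subseteq> {1..l} \<Longrightarrow> k \<in> {1..l} \<Longrightarrow> b k (fk S) = (if k \<in> S then sg k S *s fk (S - {k}) else 0)"
  using fk_act_aux by blast

end

context fock begin

lemma n_fk: "S \<subseteq> {1..l} \<Longrightarrow> k \<in> {1..l} \<Longrightarrow> b' k (b k (fk S)) = (if k \<in> S then fk S else 0)"
proof -
  assume S: "S \<subseteq> {1..l}" and k: "k \<in> {1..l}"
  have L: "Vector_Spaces.linear scale scale (b' k)" using lin_b' k by simp
  show ?thesis
  proof (cases "k \<in> S")
    case True
    have S': "S - {k} \<subseteq> {1..l}" using S by auto
    have "sg k (S - {k}) = sg k S" unfolding sg_def
      by (rule arg_cong[where f="\<lambda>n. (-1) ^ n"], rule arg_cong[where f=card]) auto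
    moreover have "insert k (S - {k}) = S" using True by auto
    ultimately show ?thesis using True b_fk[OF S k] b'_fk[OF S' k] lin_scale[OF L] sg_sq[of k S]
      by simp
  next
    case False
    then show ?thesis using b_fk[OF S k] lin_0[OF L] by simp
  qed
qed

lemma m_fk: "S \<subseteq> {1..l} \<Longrightarrow> k \<in> {1..<l} \<Longrightarrow>
  b' (k+1) (b k (fk S)) = (if k \<in> S \<and> k+1 \<notin> S then fk (insert (k+1) (S - {k})) else 0)"
proof -
  assume S: "S \<subseteq> {1..l}" and k: "k \<in> {1..<l}"
  have kl: "k \<in> {1..l}" "k+1 \<in> {1..l}" using k by auto
  have L: "Vector_Spaces.linear scale scale (b' (k+1))" using lin_b' kl by simp
  show ?thesis
  proof (cases "k \<in> S")
    case True
    have S': "S - {k} \<subseteq> {1..l}" using S by auto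
    have "sg (k+1) (S - {k}) = sg k S" unfolding sg_def
      by (rule arg_cong[where f="\<lambda>n. (-1) ^ n"], rule arg_cong[where f=card]) auto
    moreover have "(k+1 \<in> S - {k}) = (k+1 \<in> S)" by auto
    ultimately show ?thesis using True b_fk[OF S kl(1)] b'_fk[OF S' kl(2)] lin_scale[OF L] sg_sq[of k S]
      lin_0[OF L] by simp
  next
    case False
    then show ?thesis using b_fk[OF S kl(1)] lin_0[OF L] by simp
  qed
qed

lemma f_fk: "S \<subseteq> {1..l} \<Longrightarrow> k \<in> {1..<l} \<Longrightarrow>
  b' k (b (k+1) (fk S)) = (if k+1 \<in> S \<and> k \<notin> S then fk (insert k (S - {k+1})) else 0)"
proof -
  assume S: "S \<subseteq> {1..l}" and k: "k \<in> {1..<l}"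
  have kl: "k \<in> {1..l}" "k+1 \<in> {1..l}" using k by auto
  have L: "Vector_Spaces.linear scale scale (b' k)" using lin_b' kl by simp
  show ?thesis
  proof (cases "k+1 \<in> S")
    case True
    have S': "S - {k+1} \<subseteq> {1..l}" using S by auto
    show ?thesis
    proof (cases "k \<in> S")
      case False
      have "sg k (S - {k+1}) = sg (k+1) S" unfolding sg_def
        by (rule arg_cong[where f="\<lambda>n. (-1) ^ n"], rule arg_cong[where f=card]) (use False in \<open>auto simp: less_Suc_eq\<close>)
      moreover have "(k \<in> S - {k+1}) = (k \<in> S)" by auto
      ultimately show ?thesis using True False b_fk[OF S kl(2)] b'_fk[OF S' kl(1)] lin_scale[OF L]
        sg_sq[of "k+1" S] by simp
    next
      case True2: True
      then show ?thesis using True b_fk[OF S kl(2)] b'_fk[OF S' kl(1)] lin_scale[OF L] lin_0[OF L] by simp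
    qed
  next
    case False
    then show ?thesis using b_fk[OF S kl(2)] lin_0[OF L] by simp
  qed
qed

lemma b'b_swap: "j \<in> {1..l} \<Longrightarrow> k \<in> {1..l} \<Longrightarrow> b' k (b j \<psi>) = (if j = k then \<psi> else 0) - b j (b' k \<psi>)"
  using car_bb'[of j k \<psi>] by (simp add: eq_diff_eq add.commute)

lemma four:
  assumes al: "a \<in> {1..l}" and bl: "bb \<in> {1..l}" and cl: "c \<in> {1..l}" and dl: "d \<in> {1..l}"
  shows "b' a (b bb (b' c (b d \<psi>))) - b' c (b d (b' a (b bb \<psi>)))
       = (if bb = c then b' a (b d \<psi>) else 0) - (if a = d then b' c (b bb \<psi>) else 0)"
proof -
  have La: "Vector_Spaces.linear scale scale (b' a)" using lin_b' al by simp
  have Lc: "Vector_Spaces.linear scale scale (b' c)" using lin_b' cl by simp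
  define y where "y = b d \<psi>"
  define w where "w = b bb \<psi>"
  have e1: "b' a (b bb (b' c y)) = b' a ((if bb = c then y else 0) - b' c (b bb y))"
    using bb'_swap[OF bl cl, of y] by (rule arg_cong)
  have e2: "b' a ((if bb = c then y else 0) - b' c (b bb y)) = (if bb = c then b' a y else 0) - b' a (b' c (b bb y))"
    by (cases "bb = c") (simp_all add: lin_diff[OF La] lin_0[OF La] lin_neg[OF La])
  have e3: "b' a (b' c (b bb y)) = - b' c (b' a (b bb y))" by (rule b'b'_anti[OF al cl])
  have e4: "b bb y = - b d w" unfolding y_def w_def by (rule bb_anti[OF bl dl])
  have e5: "b' a (b d w) = (if d = a then w else 0) - b d (b' a w)" by (rule b'b_swap[OF dl al])
  have "b' a (b bb (b' c y)) = (if bb = c then b' a y else 0) - b' a (b' c (b bb y))"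
    by (simp only: e1 e2)
  also have "\<dots> = (if bb = c then b' a y else 0) + b' c (b' a (b bb y))"
    by (simp only: e3 diff_minus_eq_add)
  also have "\<dots> = (if bb = c then b' a y else 0) - b' c (b' a (b d w))"
    by (simp only: e4 lin_neg[OF La] lin_neg[OF Lc] diff_conv_add_uminus)
  also have "\<dots> = (if bb = c then b' a y else 0) - (if d = a then b' c w else 0) + b' c (b d (b' a w))"
  proof -
    have e6: "b' c (b' a (b d w)) = (if d = a then b' c w else 0) - b' c (b d (b' a w))"
      unfolding e5 by (cases "d = a") (simp_all add: lin_diff[OF Lc] lin_0[OF Lc] lin_neg[OF Lc])
    show ?thesis unfolding e6 by (simp add: algebra_simps)
  qed
  finally show ?thesis unfolding y_def w_def by auto
qed

end

lemma wt_sum: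
  fixes S :: "nat set" and l :: nat
  assumes S: "S \<subseteq> {1..l}"
  shows "(\<Sum>k\<in>{1..<l}. int (k * (l - k)) * (of_bool (k+1 \<in> S) - of_bool (k \<in> S)))
         = 2 * int (\<Sum> S) - int (card S) * (int l + 1)"
proof -
  define c where "c k = int k * (int l - int k)" for k
  have fS: "finite S" using S finite_subset by blast
  have cc: "int (k * (l - k)) = c k" if "k \<in> {1..<l}" for k
    using that unfolding c_def by (simp add: of_nat_diff)
  have A: "(\<Sum>k\<in>{1..<l}. c k * of_bool (k \<in> S)) = (\<Sum>k\<in>S. c k)"
  proof -
    have "(\<Sum>k\<in>{1..<l}. c k * of_bool (k \<in> S)) = (\<Sum>k\<in>{k \<in> {1..<l}. k \<in> S}. c k)"
      by (simp add: sum.inter_filter[symmetric] of_bool_def if_distrib cong: if_cong)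
    also have "\<dots> = (\<Sum>k\<in>S. c k)"
    proof (rule sum.mono_neutral_left[OF fS])
      show "{k \<in> {1..<l}. k \<in> S} \<subseteq> S" by auto
      show "\<forall>i\<in>S - {k \<in> {1..<l}. k \<in> S}. c i = 0"
      proof
        fix i assume "i \<in> S - {k \<in> {1..<l}. k \<in> S}"
        then have "i = l" using S by auto
        then show "c i = 0" by (simp add: c_def)
      qed
    qed
    finally show ?thesis .
  qed
  have B: "(\<Sum>k\<in>{1..<l}. c k * of_bool (k+1 \<in> S)) = (\<Sum>i\<in>S. c (i - 1))"
  proof -
    have "(\<Sum>k\<in>{1..<l}. c k * of_bool (k+1 \<in> S)) = (\<Sum>k\<in>{k \<in> {1..<l}. k+1 \<in> S}. c k)"
      by (simp add: sum.inter_filter[symmetric] of_bool_def if_distrib cong: if_cong)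
    also have "\<dots> = (\<Sum>i\<in>{i \<in> S. 2 \<le> i}. c (i - 1))"
      by (rule sum.reindex_bij_witness[where i="\<lambda>i. i - 1" and j="\<lambda>k. k + 1"]) (use S in auto)
    also have "\<dots> = (\<Sum>i\<in>S. c (i - 1))"
    proof (rule sum.mono_neutral_left[OF fS])
      show "{i \<in> S. 2 \<le> i} \<subseteq> S" by auto
      show "\<forall>i\<in>S - {i \<in> S. 2 \<le> i}. c (i - 1) = 0"
      proof
        fix i assume "i \<in> S - {i \<in> S. 2 \<le> i}"
        then have "i = 1" using S by force
        then show "c (i - 1) = 0" by (simp add: c_def)
      qed
    qed
    finally show ?thesis .
  qed
  have "(\<Sum>k\<in>{1..<l}. int (k * (l - k)) * (of_bool (k+1 \<in> S) - of_bool (k \<in> S)))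
      = (\<Sum>k\<in>{1..<l}. c k * of_bool (k+1 \<in> S)) - (\<Sum>k\<in>{1..<l}. c k * of_bool (k \<in> S))"
  proof -
    have "(\<Sum>k\<in>{1..<l}. int (k * (l - k)) * (of_bool (k+1 \<in> S) - of_bool (k \<in> S)))
       = (\<Sum>k\<in>{1..<l}. c k * of_bool (k+1 \<in> S) - c k * of_bool (k \<in> S))"
      by (rule sum.cong[OF refl]) (simp only: cc right_diff_distrib)
    then show ?thesis by (simp only: sum_subtractf)
  qed
  also have "\<dots> = (\<Sum>i\<in>S. c (i - 1) - c i)" using A B by (simp add: sum_subtractf)
  also have "\<dots> = (\<Sum>i\<in>S. 2 * int i - (int l + 1))"
  proof (rule sum.cong[OF refl])
    fix i assume "i \<in> S"
    then have "1 \<le> i" using S by auto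
    then show "c (i - 1) - c i = 2 * int i - (int l + 1)" unfolding c_def
      by (simp add: of_nat_diff algebra_simps)
  qed
  also have "\<dots> = 2 * int (\<Sum> S) - int (card S) * (int l + 1)"
    by (simp add: sum_subtractf sum_distrib_left[symmetric] of_nat_sum)
  finally show ?thesis .
qed

context fock begin

definition FF :: "'v \<Rightarrow> 'v" where
  "FF \<psi> = (\<Sum>k\<in>{1..<l}. of_nat (k * (l - k)) *s b' k (b (k+1) \<psi>))"

abbreviation EE where "EE \<equiv> Mop l b b'"

lemma EE_def': "EE \<psi> = (\<Sum>k\<in>{1..<l}. b' (k+1) (b k \<psi>))"
proof -
  have "{1..l-1} = {1..<l}" by auto
  then show ?thesis unfolding Mop_def by simp
qed

lemma lins: "k \<in> {1..<l} \<Longrightarrow> Vector_Spaces.linear scale scale (b k) \<and> Vector_Spaces.linear scale scale (b (k+1))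
   \<and> Vector_Spaces.linear scale scale (b' k) \<and> Vector_Spaces.linear scale scale (b' (k+1))"
  using lin_b lin_b' by auto

lemma b_add: "k \<in> {1..l} \<Longrightarrow> b k (x + y) = b k x + b k y" using lin_add lin_b by blast
lemma b'_add: "k \<in> {1..l} \<Longrightarrow> b' k (x + y) = b' k x + b' k y" using lin_add lin_b' by blast
lemma b_scale: "k \<in> {1..l} \<Longrightarrow> b k (c *s x) = c *s b k x" using lin_scale lin_b by blast
lemma b'_scale: "k \<in> {1..l} \<Longrightarrow> b' k (c *s x) = c *s b' k x" using lin_scale lin_b' by blast
lemma b_sum: "k \<in> {1..l} \<Longrightarrow> b k (sum g A) = (\<Sum>a\<in>A. b k (g a))" using lin_sum lin_b by blast
lemma b'_sum: "k \<in> {1..l} \<Longrightarrow> b' k (sum g A) = (\<Sum>a\<in>A. b' k (g a))" using lin_sum lin_b' by blast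
lemma b_diff: "k \<in> {1..l} \<Longrightarrow> b k (x - y) = b k x - b k y" using lin_diff lin_b by blast
lemma b'_diff: "k \<in> {1..l} \<Longrightarrow> b' k (x - y) = b' k x - b' k y" using lin_diff lin_b' by blast
lemma b_0: "k \<in> {1..l} \<Longrightarrow> b k 0 = 0" using lin_0 lin_b by blast
lemma b'_0: "k \<in> {1..l} \<Longrightarrow> b' k 0 = 0" using lin_0 lin_b' by blast

lemma kin: "k \<in> {1..<l} \<Longrightarrow> k \<in> {1..l}" "k \<in> {1..<l} \<Longrightarrow> Suc k \<in> {1..l}"
  by auto

lemma lin_EE: "Vector_Spaces.linear scale scale EE"
  unfolding Vector_Spaces.linear_iff
proof (intro conjI allI)
  show "vector_space scale" by (rule vector_space_axioms)
  show "vector_space scale" by (rule vector_space_axioms)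
  fix x y
  show "EE (x + y) = EE x + EE y" unfolding EE_def' sum.distrib[symmetric]
  proof (rule sum.cong[OF refl])
    fix k assume k: "k \<in> {1..<l}"
    show "b' (k+1) (b k (x + y)) = b' (k+1) (b k x) + b' (k+1) (b k y)"
      using kin[OF k] by (simp add: b_add b'_add)
  qed
next
  fix c x
  show "EE (c *s x) = c *s EE x" unfolding EE_def' scale_sum_right
  proof (rule sum.cong[OF refl])
    fix k assume k: "k \<in> {1..<l}"
    show "b' (k+1) (b k (c *s x)) = c *s b' (k+1) (b k x)"
      using kin[OF k] by (simp add: b_scale b'_scale)
  qed
qed

lemma lin_FF: "Vector_Spaces.linear scale scale FF"
  unfolding Vector_Spaces.linear_iff
proof (intro conjI allI)
  show "vector_space scale" by (rule vector_space_axioms)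
  show "vector_space scale" by (rule vector_space_axioms)
  fix x y
  show "FF (x + y) = FF x + FF y" unfolding FF_def sum.distrib[symmetric]
  proof (rule sum.cong[OF refl])
    fix k assume k: "k \<in> {1..<l}"
    show "of_nat (k * (l - k)) *s b' k (b (k+1) (x + y)) = of_nat (k * (l - k)) *s b' k (b (k+1) x) + of_nat (k * (l - k)) *s b' k (b (k+1) y)"
      using kin[OF k] by (simp add: b_add b'_add scale_right_distrib)
  qed
next
  fix c x
  show "FF (c *s x) = c *s FF x" unfolding FF_def scale_sum_right
  proof (rule sum.cong[OF refl])
    fix k assume k: "k \<in> {1..<l}"
    show "of_nat (k * (l - k)) *s b' k (b (k+1) (c *s x)) = c *s (of_nat (k * (l - k)) *s b' k (b (k+1) x))"
      using kin[OF k] by (simp add: b_scale b'_scale mult.commute)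
  qed
qed

end

context fock begin

lemma comm: "EE (FF \<psi>) - FF (EE \<psi>) =
  (\<Sum>k\<in>{1..<l}. (of_nat (k * (l - k)) :: complex) *s (b' (k+1) (b (k+1) \<psi>) - b' k (b k \<psi>)))"
proof -
  define c :: "nat \<Rightarrow> complex" where "c k = of_nat (k * (l - k))" for k
  let ?I = "{1..<l}"
  have L: "EE (FF \<psi>) = (\<Sum>i\<in>?I. \<Sum>k\<in>?I. c k *s b' (i+1) (b i (b' k (b (k+1) \<psi>))))"
    unfolding EE_def' FF_def c_def
  proof (rule sum.cong[OF refl])
    fix i assume i: "i \<in> ?I"
    show "b' (i+1) (b i (\<Sum>k\<in>?I. of_nat (k * (l - k)) *s b' k (b (k+1) \<psi>))) =
          (\<Sum>k\<in>?I. of_nat (k * (l - k)) *s b' (i+1) (b i (b' k (b (k+1) \<psi>))))"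
      using kin[OF i] by (simp add: b_sum b'_sum b_scale b'_scale)
  qed
  have R: "FF (EE \<psi>) = (\<Sum>i\<in>?I. \<Sum>k\<in>?I. c k *s b' k (b (k+1) (b' (i+1) (b i \<psi>))))"
  proof -
    have "FF (EE \<psi>) = (\<Sum>k\<in>?I. \<Sum>i\<in>?I. c k *s b' k (b (k+1) (b' (i+1) (b i \<psi>))))"
      unfolding EE_def' FF_def c_def
    proof (rule sum.cong[OF refl])
      fix k assume k: "k \<in> ?I"
      show "of_nat (k * (l - k)) *s b' k (b (k+1) (\<Sum>i\<in>?I. b' (i+1) (b i \<psi>))) =
            (\<Sum>i\<in>?I. of_nat (k * (l - k)) *s b' k (b (k+1) (b' (i+1) (b i \<psi>))))"
        using kin[OF k] by (simp add: b_sum b'_sum scale_sum_right)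
    qed
    also have "\<dots> = (\<Sum>i\<in>?I. \<Sum>k\<in>?I. c k *s b' k (b (k+1) (b' (i+1) (b i \<psi>))))"
      by (rule sum.swap)
    finally show ?thesis .
  qed
  have D: "b' (i+1) (b i (b' k (b (k+1) \<psi>))) - b' k (b (k+1) (b' (i+1) (b i \<psi>)))
        = (if i = k then b' (k+1) (b (k+1) \<psi>) - b' k (b k \<psi>) else 0)"
    if i: "i \<in> ?I" and k: "k \<in> ?I" for i k
    using four[OF kin(2)[OF i] kin(1)[OF i] kin(1)[OF k] kin(2)[OF k], of \<psi>]
    by (cases "i = k") simp_all
  have "EE (FF \<psi>) - FF (EE \<psi>) = (\<Sum>i\<in>?I. \<Sum>k\<in>?I. c k *s (b' (i+1) (b i (b' k (b (k+1) \<psi>))) - b' k (b (k+1) (b' (i+1) (b i \<psi>)))))"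
    unfolding L R by (simp add: sum_subtractf[symmetric] scale_right_diff_distrib)
  also have "\<dots> = (\<Sum>i\<in>?I. \<Sum>k\<in>?I. if i = k then c k *s (b' (k+1) (b (k+1) \<psi>) - b' k (b k \<psi>)) else 0)"
  proof (rule sum.cong[OF refl], rule sum.cong[OF refl])
    fix i k assume i: "i \<in> ?I" and k: "k \<in> ?I"
    show "c k *s (b' (i+1) (b i (b' k (b (k+1) \<psi>))) - b' k (b (k+1) (b' (i+1) (b i \<psi>)))) =
      (if i = k then c k *s (b' (k+1) (b (k+1) \<psi>) - b' k (b k \<psi>)) else 0)"
      unfolding D[OF i k] by simp
  qed
  also have "\<dots> = (\<Sum>i\<in>?I. c i *s (b' (i+1) (b (i+1) \<psi>) - b' i (b i \<psi>)))"
    by (rule sum.cong[OF refl]) (simp add: sum.delta)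
  finally show ?thesis unfolding c_def .
qed

lemma EE_fk: "S \<subseteq> {1..l} \<Longrightarrow> EE (fk S) = (\<Sum>k\<in>{1..<l}. if k \<in> S \<and> k+1 \<notin> S then fk (insert (k+1) (S - {k})) else 0)"
  unfolding EE_def' by (rule sum.cong[OF refl]) (rule m_fk)

lemma FF_fk: "S \<subseteq> {1..l} \<Longrightarrow> FF (fk S) = (\<Sum>k\<in>{1..<l}. of_nat (k * (l - k)) *s
    (if k+1 \<in> S \<and> k \<notin> S then fk (insert k (S - {k+1})) else 0))"
  unfolding FF_def by (rule sum.cong[OF refl]) (simp only: f_fk)

lemma H_fk:
  assumes S: "S \<subseteq> {1..l}"
  shows "EE (FF (fk S)) - FF (EE (fk S)) = of_int (2 * int (\<Sum> S) - int (card S) * (int l + 1)) *s fk S"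
proof -
  have "EE (FF (fk S)) - FF (EE (fk S)) =
    (\<Sum>k\<in>{1..<l}. ((of_nat (k * (l - k)) :: complex) * (of_bool (k+1 \<in> S) - of_bool (k \<in> S))) *s fk S)"
    unfolding comm
  proof (rule sum.cong[OF refl])
    fix k assume k: "k \<in> {1..<l}"
    show "(of_nat (k * (l - k)) :: complex) *s (b' (k+1) (b (k+1) (fk S)) - b' k (b k (fk S))) =
      ((of_nat (k * (l - k)) :: complex) * (of_bool (k+1 \<in> S) - of_bool (k \<in> S))) *s fk S"
      using n_fk[OF S kin(1)[OF k]] n_fk[OF S kin(2)[OF k]]
      by (simp add: scale_right_diff_distrib scale_left_diff_distrib)
  qed
  also have "\<dots> = (\<Sum>k\<in>{1..<l}. (of_nat (k * (l - k)) :: complex) * (of_bool (k+1 \<in> S) - of_bool (k \<in> S))) *s fk S"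
    by (simp only: scale_sum_left)
  also have "(\<Sum>k\<in>{1..<l}. (of_nat (k * (l - k)) :: complex) * (of_bool (k+1 \<in> S) - of_bool (k \<in> S)))
     = of_int (\<Sum>k\<in>{1..<l}. int (k * (l - k)) * (of_bool (k+1 \<in> S) - of_bool (k \<in> S)))"
    by (simp add: of_int_sum)
  also have "\<dots> = of_int (2 * int (\<Sum> S) - int (card S) * (int l + 1))"
    using wt_sum[OF S] by simp
  finally show ?thesis .
qed

lemma N_fk:
  assumes S: "S \<subseteq> {1..l}"
  shows "Nop l b b' (fk S) = of_nat (card S) *s fk S"
proof -
  have "Nop l b b' (fk S) = (\<Sum>k\<in>{1..l}. (of_bool (k \<in> S) :: complex) *s fk S)"
    unfolding Nop_def by (rule sum.cong[OF refl]) (simp add: n_fk[OF S])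
  also have "\<dots> = (\<Sum>k\<in>{1..l}. (of_bool (k \<in> S) :: complex)) *s fk S"
    by (simp only: scale_sum_left)
  also have "(\<Sum>k\<in>{1..l}. (of_bool (k \<in> S) :: complex)) = of_nat (card S)"
  proof -
    have "{1..l} \<inter> {x. x \<in> S} = S" using S by auto
    then show ?thesis by simp
  qed
  finally show ?thesis .
qed

end

definition wt :: "nat \<Rightarrow> nat \<Rightarrow> nat set \<Rightarrow> int" where
  "wt l m S = 2 * int (\<Sum> S) - int m * (int l + 1)"

lemma mv_props:
  fixes S :: "nat set" and l k :: nat
  assumes S: "S \<subseteq> {1..l}" and k: "k \<in> {1..<l}" and kS: "k \<in> S" and k1: "k+1 \<notin> S"
  shows "insert (k+1) (S - {k}) \<subseteq> {1..l}" "card (insert (k+1) (S - {k})) = card S"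
    "\<Sum> (insert (k+1) (S - {k})) = \<Sum> S + 1"
proof -
  have fS: "finite S" by (rule finite_subset[OF S]) simp
  show "insert (k+1) (S - {k}) \<subseteq> {1..l}" using S k by auto
  show "card (insert (k+1) (S - {k})) = card S" using fS kS k1 card_Suc_Diff1[OF fS kS] by simp
  have "\<Sum> (insert (k+1) (S - {k})) = (k+1) + \<Sum> (S - {k})" using fS k1 by simp
  moreover have "\<Sum> S = k + \<Sum> (S - {k})" using fS kS by (simp add: sum.remove)
  ultimately show "\<Sum> (insert (k+1) (S - {k})) = \<Sum> S + 1" by simp
qed

lemma mv'_props:
  fixes S :: "nat set" and l k :: nat
  assumes S: "S \<subseteq> {1..l}" and k: "k \<in> {1..<l}" and kS: "k \<notin> S" and k1: "k+1 \<in> S"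
  shows "insert k (S - {k+1}) \<subseteq> {1..l}" "card (insert k (S - {k+1})) = card S"
    "\<Sum> (insert k (S - {k+1})) + 1 = \<Sum> S"
proof -
  have fS: "finite S" by (rule finite_subset[OF S]) simp
  show "insert k (S - {k+1}) \<subseteq> {1..l}" using S k by auto
  show "card (insert k (S - {k+1})) = card S" using fS kS k1 card_Suc_Diff1[OF fS k1] by simp
  have "\<Sum> (insert k (S - {k+1})) = k + \<Sum> (S - {k+1})" using fS kS by simp
  moreover have "\<Sum> S = (k+1) + \<Sum> (S - {k+1})" using fS k1 by (simp add: sum.remove)
  ultimately show "\<Sum> (insert k (S - {k+1})) + 1 = \<Sum> S" by simp
qed

context fock begin

definition At :: "nat \<Rightarrow> int \<Rightarrow> nat set set" where
  "At m t = {S \<in> subs l m. wt l m S = t}"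

definition VV :: "nat \<Rightarrow> int \<Rightarrow> 'v set" where
  "VV m t = span (fk ` At m t)"

lemma subspace_VV: "subspace (VV m t)" unfolding VV_def by simp

lemma EE_gen: "S \<in> At m t \<Longrightarrow> EE (fk S) \<in> VV m (t + 2)"
proof -
  assume St: "S \<in> At m t"
  then have S: "S \<subseteq> {1..l}" "card S = m" "wt l m S = t" unfolding At_def subs_def by auto
  show ?thesis unfolding EE_fk[OF S(1)] VV_def
  proof (rule span_sum)
    fix k assume k: "k \<in> {1..<l}"
    show "(if k \<in> S \<and> k + 1 \<notin> S then fk (insert (k + 1) (S - {k})) else 0) \<in> span (fk ` At m (t + 2))"
    proof (cases "k \<in> S \<and> k + 1 \<notin> S")
      case True
      note P = mv_props[OF S(1) k True[THEN conjunct1] True[THEN conjunct2]]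
      have "insert (k + 1) (S - {k}) \<in> At m (t + 2)"
        using P S unfolding At_def subs_def wt_def by (auto simp del: of_nat_sum)
      then have "fk (insert (k + 1) (S - {k})) \<in> span (fk ` At m (t + 2))" by (intro span_base imageI)
      then show ?thesis unfolding if_P[OF True] .
    next
      case False then show ?thesis unfolding if_not_P[OF False] using span_zero span_scale by auto
    qed
  qed
qed

lemma FF_gen: "S \<in> At m t \<Longrightarrow> FF (fk S) \<in> VV m (t - 2)"
proof -
  assume St: "S \<in> At m t"
  then have S: "S \<subseteq> {1..l}" "card S = m" "wt l m S = t" unfolding At_def subs_def by auto
  show ?thesis unfolding FF_fk[OF S(1)] VV_def
  proof (rule span_sum)
    fix k assume k: "k \<in> {1..<l}"
    show "of_nat (k * (l - k)) *s (if k+1 \<in> S \<and> k \<notin> S then fk (insert k (S - {k+1})) else 0) \<in> span (fk ` At m (t - 2))"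
    proof (cases "k+1 \<in> S \<and> k \<notin> S")
      case True
      note P = mv'_props[OF S(1) k True[THEN conjunct2] True[THEN conjunct1]]
      have "insert k (S - {k+1}) \<in> At m (t - 2)"
        using P S unfolding At_def subs_def wt_def by (auto simp del: of_nat_sum)
      then have "fk (insert k (S - {k+1})) \<in> span (fk ` At m (t - 2))" by (intro span_base imageI)
      then show ?thesis unfolding if_P[OF True] by (rule span_scale)
    next
      case False then show ?thesis unfolding if_not_P[OF False] using span_zero span_scale by auto
    qed
  qed
qed

lemma EE_VV: "x \<in> VV m t \<Longrightarrow> EE x \<in> VV m (t + 2)"
proof -
  assume "x \<in> VV m t"
  then have "EE x \<in> EE ` span (fk ` At m t)" unfolding VV_def by blast
  also have "\<dots> = span (EE ` fk ` At m t)" by (rule lin_span_image[OF lin_EE])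
  also have "\<dots> \<subseteq> VV m (t + 2)"
    by (rule span_minimal[OF _ subspace_VV]) (use EE_gen in blast)
  finally show ?thesis .
qed

lemma FF_VV: "x \<in> VV m t \<Longrightarrow> FF x \<in> VV m (t - 2)"
proof -
  assume "x \<in> VV m t"
  then have "FF x \<in> FF ` span (fk ` At m t)" unfolding VV_def by blast
  also have "\<dots> = span (FF ` fk ` At m t)" by (rule lin_span_image[OF lin_FF])
  also have "\<dots> \<subseteq> VV m (t - 2)"
    by (rule span_minimal[OF _ subspace_VV]) (use FF_gen in blast)
  finally show ?thesis .
qed

lemma H_VV: "x \<in> VV m t \<Longrightarrow> EE (FF x) - FF (EE x) = of_int t *s x"
proof -
  assume "x \<in> VV m t"
  then have "x \<in> span (fk ` At m t)" unfolding VV_def .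
  then show ?thesis
  proof (induction rule: span_induct_alt)
    case base
    then show ?case using lin_0[OF lin_EE] lin_0[OF lin_FF] by simp
  next
    case (step c x y)
    then obtain S where S: "S \<in> At m t" "x = fk S" by blast
    then have S': "S \<subseteq> {1..l}" "card S = m" "wt l m S = t" unfolding At_def subs_def by auto
    have e: "2 * int (\<Sum> S) - int (card S) * (int l + 1) = t"
      using S'(2) S'(3) unfolding wt_def by (simp del: of_nat_sum)
    have hx: "EE (FF x) - FF (EE x) = of_int t *s x"
      using H_fk[OF S'(1)] unfolding e by (simp only: S(2))
    have "EE (FF (c *s x + y)) - FF (EE (c *s x + y)) = c *s (EE (FF x) - FF (EE x)) + (EE (FF y) - FF (EE y))"
      by (simp add: lin_add[OF lin_EE] lin_add[OF lin_FF] lin_scale[OF lin_EE] lin_scale[OF lin_FF]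
          scale_right_diff_distrib algebra_simps)
    also have "\<dots> = of_int t *s (c *s x + y)"
      using hx step.IH by (simp add: scale_right_distrib mult.commute)
    finally show ?case .
  qed
qed

lemma wt_bounds: "S \<in> subs l m \<Longrightarrow> - (int m * (int l + 1)) \<le> wt l m S \<and> wt l m S \<le> int m * (int l + 1)"
proof -
  assume "S \<in> subs l m"
  then have S: "S \<subseteq> {1..l}" "card S = m" unfolding subs_def by auto
  have le: "\<And>i. i \<in> S \<Longrightarrow> id i \<le> l" using S(1) by auto
  have "sum id S \<le> of_nat (card S) * l" by (rule sum_bounded_above[OF le])
  then have "\<Sum> S \<le> card S * l" by simp
  then have "int (\<Sum> S) \<le> int m * int l" using S by (metis of_nat_le_iff of_nat_mult)
  moreover have "0 \<le> int (\<Sum> S)" by (rule of_nat_0_le_iff)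
  moreover have "int m * int l \<le> int m * (int l + 1)" by (simp add: distrib_left)
  ultimately show ?thesis unfolding wt_def by (simp del: of_nat_sum)
qed

lemma VV_bot: "t < - (int m * (int l + 1)) \<Longrightarrow> x \<in> VV m t \<Longrightarrow> x = 0"
proof -
  assume t: "t < - (int m * (int l + 1))" and x: "x \<in> VV m t"
  have "At m t = {}" using wt_bounds t unfolding At_def by force
  then show ?thesis using x unfolding VV_def by simp
qed

lemma sl2: "x \<in> VV m t \<Longrightarrow> (EE ^^ k) x = 0 \<Longrightarrow> t + int k \<le> 0 \<Longrightarrow> x = 0"
  by (rule sl2_inj[OF lin_EE lin_FF EE_VV FF_VV H_VV VV_bot]) auto

lemma EEpow_VV: "x \<in> VV m t \<Longrightarrow> (EE ^^ j) x \<in> VV m (t + 2 * int j)"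
proof (induction j)
  case 0 then show ?case by simp
next
  case (Suc j)
  then show ?case using EE_VV[OF Suc.IH[OF Suc.prems]] by (simp add: algebra_simps)
qed

end

definition rho :: "nat \<Rightarrow> nat set \<Rightarrow> nat set" where
  "rho l S = (\<lambda>i. l + 1 - i) ` S"

lemma rho_props:
  fixes S :: "nat set" and l :: nat
  assumes S: "S \<subseteq> {1..l}"
  shows "rho l S \<subseteq> {1..l}" "card (rho l S) = card S"
    "int (\<Sum> (rho l S)) = int (card S) * (int l + 1) - int (\<Sum> S)" "rho l (rho l S) = S"
proof -
  have inj: "inj_on (\<lambda>i. l + 1 - i) {1..l}" by (auto simp: inj_on_def)
  have injS: "inj_on (\<lambda>i. l + 1 - i) S" using inj_on_subset[OF inj S] .
  have fS: "finite S" by (rule finite_subset[OF S]) simp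
  show "rho l S \<subseteq> {1..l}"
  proof
    fix x assume "x \<in> rho l S"
    then obtain i where i: "i \<in> S" "x = l + 1 - i" unfolding rho_def by auto
    then have "1 \<le> i \<and> i \<le> l" using S by auto
    then show "x \<in> {1..l}" using i by auto
  qed
  show "card (rho l S) = card S" unfolding rho_def using card_image[OF injS] .
  have "\<Sum> (rho l S) = (\<Sum>i\<in>S. l + 1 - i)" unfolding rho_def using sum.reindex[OF injS, of id] by simp
  then have "int (\<Sum> (rho l S)) = (\<Sum>i\<in>S. int (l + 1 - i))" by (simp add: of_nat_sum)
  also have "\<dots> = (\<Sum>i\<in>S. (int l + 1) - int i)"
  proof (rule sum.cong[OF refl])
    fix i assume "i \<in> S"
    then have "i \<le> l + 1" using S by auto
    then show "int (l + 1 - i) = (int l + 1) - int i" by (simp add: of_nat_diff)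
  qed
  also have "\<dots> = int (card S) * (int l + 1) - int (\<Sum> S)"
    by (simp add: sum_subtractf of_nat_sum)
  finally show "int (\<Sum> (rho l S)) = int (card S) * (int l + 1) - int (\<Sum> S)" .
  have "(\<lambda>i. l + 1 - i) ` (\<lambda>i. l + 1 - i) ` S = S"
  proof -
    have "(\<lambda>i. l + 1 - i) ` (\<lambda>i. l + 1 - i) ` S = (\<lambda>i. l + 1 - (l + 1 - i)) ` S" by (simp add: image_image)
    also have "\<dots> = id ` S"
    proof (rule image_cong[OF refl])
      fix i assume "i \<in> S"
      then have "i \<le> l + 1" using S by auto
      then show "l + 1 - (l + 1 - i) = id i" by simp
    qed
    finally show ?thesis by simp
  qed
  then show "rho l (rho l S) = S" unfolding rho_def .
qed

context fock begin

lemma indep_sub: "A \<subseteq> Pow {1..l} \<Longrightarrow> independent (fk ` A)"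
  by (rule independent_mono[OF independent_Basis]) (rule image_mono)

lemma At_sub: "At m t \<subseteq> Pow {1..l}" unfolding At_def subs_def by auto

lemma dim_VV: "dim (VV m t) = card (At m t)"
proof -
  have "dim (VV m t) = card (fk ` At m t)"
    unfolding VV_def by (rule dim_span_eq_card_independent[OF indep_sub[OF At_sub]])
  also have "\<dots> = card (At m t)" using card_image inj_on_subset[OF basis_inj At_sub] by blast
  finally show ?thesis .
qed

lemma card_At_sym: "card (At m t) \<le> card (At m (-t))"
proof -
  have img: "rho l ` At m t \<subseteq> At m (-t)"
  proof
    fix X assume "X \<in> rho l ` At m t"
    then obtain S where S: "S \<in> At m t" "X = rho l S" by auto
    then have S': "S \<subseteq> {1..l}" "card S = m" "wt l m S = t" unfolding At_def subs_def by auto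
    note R = rho_props[OF S'(1)]
    have "wt l m X = - t" using S'(2,3) R(2,3) S(2) unfolding wt_def by (simp del: of_nat_sum)
    then show "X \<in> At m (-t)" using R(1,2) S(2) S'(2) unfolding At_def subs_def by simp
  qed
  have inj: "inj_on (rho l) (At m t)"
  proof
    fix S T assume "S \<in> At m t" "T \<in> At m t" "rho l S = rho l T"
    then show "S = T" using rho_props(4) At_sub by (metis PowD subsetD)
  qed
  have fin: "finite (At m (-t))" by (rule finite_subset[OF At_sub]) simp
  show ?thesis by (rule card_inj_on_le[OF inj img fin])
qed

lemma card_At_sym_eq: "card (At m (-t)) = card (At m t)"
  using card_At_sym[of m t] card_At_sym[of m "-t"] by simp

lemma EEpow_lin: "Vector_Spaces.linear scale scale (EE ^^ d)"
  by (rule lin_pow[OF lin_EE])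

lemma rank_inj: "t + int d \<le> 0 \<Longrightarrow> dim ((EE ^^ d) ` VV m t) = card (At m t)"
proof -
  assume td: "t + int d \<le> 0"
  have "dim (VV m t) = dim {x \<in> VV m t. (EE ^^ d) x = 0} + dim ((EE ^^ d) ` VV m t)"
    by (rule rank_nullity[OF subspace_VV EEpow_lin])
  moreover have "{x \<in> VV m t. (EE ^^ d) x = 0} \<subseteq> {0}" using sl2 td by blast
  ultimately show ?thesis using dim_VV by simp
qed

lemma rank_VV: "dim ((EE ^^ d) ` VV m t) = (if t + int d \<le> 0 then card (At m t) else card (At m (t + 2 * int d)))"
proof (cases "t + int d \<le> 0")
  case True then show ?thesis using rank_inj by simp
next
  case False
  then have tpos: "0 \<le> t + int d" by simp
  define j where "j = nat (t + int d)"
  define \<mu> where "\<mu> = t + 2 * int d"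
  have up: "(EE ^^ d) ` VV m t \<subseteq> VV m \<mu>" unfolding \<mu>_def using EEpow_VV by blast
  have "dim ((EE ^^ d) ` VV m t) \<le> dim (VV m \<mu>)" by (rule dim_subset[OF up])
  then have le: "dim ((EE ^^ d) ` VV m t) \<le> card (At m \<mu>)" using dim_VV by simp
  have sub: "(EE ^^ (d + j)) ` VV m (-\<mu>) \<subseteq> (EE ^^ d) ` VV m t"
  proof
    fix y assume "y \<in> (EE ^^ (d + j)) ` VV m (-\<mu>)"
    then obtain x where x: "x \<in> VV m (-\<mu>)" "y = (EE ^^ (d + j)) x" by auto
    have "(EE ^^ j) x \<in> VV m (-\<mu> + 2 * int j)" using EEpow_VV[OF x(1)] .
    moreover have "-\<mu> + 2 * int j = t" unfolding \<mu>_def j_def using tpos by simp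
    ultimately have "(EE ^^ j) x \<in> VV m t" by simp
    moreover have "y = (EE ^^ d) ((EE ^^ j) x)" using x(2) by (simp add: funpow_add)
    ultimately show "y \<in> (EE ^^ d) ` VV m t" by blast
  qed
  have "dim ((EE ^^ (d + j)) ` VV m (-\<mu>)) = card (At m (-\<mu>))"
    by (rule rank_inj) (simp add: \<mu>_def j_def tpos)
  then have "card (At m \<mu>) \<le> dim ((EE ^^ d) ` VV m t)"
    using dim_subset[OF sub] card_At_sym_eq[of m \<mu>] by simp
  then show ?thesis using le False \<mu>_def by simp
qed

end

context fock begin

lemma lin_N: "Vector_Spaces.linear scale scale (Nop l b b')"
  unfolding Vector_Spaces.linear_iff
proof (intro conjI allI)
  show "vector_space scale" by (rule vector_space_axioms)
  show "vector_space scale" by (rule vector_space_axioms)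
  fix x y
  show "Nop l b b' (x + y) = Nop l b b' x + Nop l b b' y" unfolding Nop_def sum.distrib[symmetric]
  proof (rule sum.cong[OF refl])
    fix k assume k: "k \<in> {1..l}"
    show "b' k (b k (x + y)) = b' k (b k x) + b' k (b k y)"
      using k by (simp add: b_add b'_add)
  qed
next
  fix c x
  show "Nop l b b' (c *s x) = c *s Nop l b b' x" unfolding Nop_def scale_sum_right
  proof (rule sum.cong[OF refl])
    fix k assume k: "k \<in> {1..l}"
    show "b' k (b k (c *s x)) = c *s b' k (b k x)"
      using k by (simp add: b_scale b'_scale)
  qed
qed

lemma fk_indep:
  assumes sum0: "(\<Sum>S\<in>Pow {1..l}. c S *s fk S) = 0" and S: "S \<in> Pow {1..l}"
  shows "c S = 0"
proof -
  let ?P = "Pow {1..l}"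
  have fin: "finite (fk ` ?P)" by simp
  have *: "\<forall>c. (\<Sum>v\<in>fk ` ?P. c v *s v) = 0 \<longrightarrow> (\<forall>v\<in>fk ` ?P. c v = 0)"
    using independent_Basis independent_explicit by blast
  define c' where "c' v = c (the_inv_into ?P fk v)" for v
  have "(\<Sum>v\<in>fk ` ?P. c' v *s v) = (\<Sum>S\<in>?P. c' (fk S) *s fk S)"
    by (rule sum.reindex[OF basis_inj, unfolded comp_def])
  also have "\<dots> = (\<Sum>S\<in>?P. c S *s fk S)"
  proof (rule sum.cong[OF refl])
    fix S assume S: "S \<in> ?P"
    show "c' (fk S) *s fk S = c S *s fk S" by (simp only: c'_def the_inv_into_f_f[OF basis_inj S])
  qed
  finally have "(\<Sum>v\<in>fk ` ?P. c' v *s v) = 0" using sum0 by simp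
  then have "c' (fk S) = 0" using * S by blast
  then show ?thesis by (simp only: c'_def the_inv_into_f_f[OF basis_inj S])
qed

lemma fk_repr: "\<exists>u. \<psi> = (\<Sum>S\<in>Pow {1..l}. u S *s fk S)"
proof -
  let ?P = "Pow {1..l}"
  have "\<psi> \<in> span (fk ` ?P)" using span_Basis by simp
  then obtain u where u: "\<psi> = (\<Sum>v\<in>fk ` ?P. u v *s v)"
    using span_finite[OF finite_Basis] by auto
  also have "\<dots> = (\<Sum>S\<in>?P. u (fk S) *s fk S)"
    by (rule sum.reindex[OF basis_inj, unfolded comp_def])
  finally show ?thesis by (rule exI[where x="\<lambda>S. u (fk S)"])
qed

lemma subspace_Vsp: "subspace (Vsp scale l m b b')"
  unfolding Vsp_def subspace_def
  by (simp add: lin_0[OF lin_N] lin_add[OF lin_N] lin_scale[OF lin_N] scale_right_distrib mult.commute)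

lemma Vsp_eq: "Vsp scale l m b b' = span (fk ` subs l m)"
proof
  show "span (fk ` subs l m) \<subseteq> Vsp scale l m b b'"
  proof (rule span_minimal[OF _ subspace_Vsp])
    show "fk ` subs l m \<subseteq> Vsp scale l m b b'"
    proof
      fix v assume "v \<in> fk ` subs l m"
      then obtain S where S: "S \<in> subs l m" "v = fk S" by auto
      then have "S \<subseteq> {1..l}" "card S = m" unfolding subs_def by auto
      then show "v \<in> Vsp scale l m b b'" unfolding Vsp_def using N_fk S(2) by simp
    qed
  qed
next
  show "Vsp scale l m b b' \<subseteq> span (fk ` subs l m)"
  proof
    fix \<psi> assume "\<psi> \<in> Vsp scale l m b b'"
    then have N: "Nop l b b' \<psi> = of_nat m *s \<psi>" unfolding Vsp_def by simp
    let ?P = "Pow {1..l}"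
    obtain u where u: "\<psi> = (\<Sum>S\<in>?P. u S *s fk S)" using fk_repr by blast
    have NN: "Nop l b b' \<psi> = (\<Sum>S\<in>?P. (u S * of_nat (card S)) *s fk S)"
      unfolding u lin_sum[OF lin_N]
    proof (rule sum.cong[OF refl])
      fix S assume "S \<in> ?P"
      then show "Nop l b b' (u S *s fk S) = (u S * of_nat (card S)) *s fk S"
        using N_fk lin_scale[OF lin_N] by simp
    qed
    have MM: "of_nat m *s \<psi> = (\<Sum>S\<in>?P. (u S * of_nat m) *s fk S)"
      unfolding u scale_sum_right by (simp add: mult.commute)
    have "(\<Sum>S\<in>?P. (u S * (of_nat (card S) - of_nat m)) *s fk S)
       = (\<Sum>S\<in>?P. (u S * of_nat (card S)) *s fk S) - (\<Sum>S\<in>?P. (u S * of_nat m) *s fk S)"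
      by (simp only: sum_subtractf[symmetric] right_diff_distrib scale_left_diff_distrib)
    also have "\<dots> = 0" unfolding NN[symmetric] MM[symmetric] N by simp
    finally have "(\<Sum>S\<in>?P. (u S * (of_nat (card S) - of_nat m)) *s fk S) = 0" .
    note sum0 = this
    have z: "u S * (of_nat (card S) - of_nat m) = 0" if "S \<in> ?P" for S
      using fk_indep[where c="\<lambda>S. u S * (of_nat (card S) - of_nat m)", OF sum0 that] by simp
    show "\<psi> \<in> span (fk ` subs l m)" unfolding u
    proof (rule span_sum)
      fix S assume S: "S \<in> ?P"
      show "u S *s fk S \<in> span (fk ` subs l m)"
      proof (cases "card S = m")
        case True
        then have "S \<in> subs l m" using S unfolding subs_def by auto
        then show ?thesis by (intro span_scale span_base imageI)
      next
        case False
        then have "(of_nat (card S) - of_nat m :: complex) \<noteq> 0" by simp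
        then have "u S = 0" using z[OF S] by simp
        then show ?thesis by (simp add: span_zero)
      qed
    qed
  qed
qed

end

lemma tri2: "2 * tri m = m * (m + 1)"
  by (induction m) (simp_all add: tri_Suc, simp add: tri_def)

lemma arith_key:
  fixes X T m l d :: int
  assumes "2 * T = m * m + m"
  shows "(2 * X - m * (l + 1) = 1 - d \<or> 2 * X - m * (l + 1) = - d) \<longleftrightarrow> X - T = (m * (l - m) - (d - 1)) div 2"
proof -
  have e1: "m * (l + 1) = m * l + m" by algebra
  have e2: "m * (l - m) = m * l - m * m" by algebra
  define a where "a = m * l"
  define s where "s = m * m"
  have "2 * T = s + m" using assms s_def by simp
  then show ?thesis unfolding e1 e2 a_def[symmetric] s_def[symmetric] by presburger
qed

context fock begin

lemma rho_wt: "S \<in> subs l m \<Longrightarrow> rho l S \<in> subs l m \<and> wt l m (rho l S) = - wt l m S"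
proof -
  assume "S \<in> subs l m"
  then have S': "S \<subseteq> {1..l}" "card S = m" unfolding subs_def by auto
  note R = rho_props[OF S'(1)]
  have "wt l m (rho l S) = - wt l m S" using S'(2) R(2,3) unfolding wt_def by (simp del: of_nat_sum)
  then show ?thesis using R(1,2) S'(2) unfolding subs_def by simp
qed

lemma card_sym_le: "card {S \<in> subs l m. P (wt l m S)} \<le> card {S \<in> subs l m. P (- wt l m S)}"
proof -
  have img: "rho l ` {S \<in> subs l m. P (wt l m S)} \<subseteq> {S \<in> subs l m. P (- wt l m S)}"
    using rho_wt by auto
  have inj: "inj_on (rho l) {S \<in> subs l m. P (wt l m S)}"
  proof
    fix S T assume "S \<in> {S \<in> subs l m. P (wt l m S)}" "T \<in> {S \<in> subs l m. P (wt l m S)}" "rho l S = rho l T"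
    then show "S = T" using rho_props(4) unfolding subs_def by (metis (mono_tags, lifting) mem_Collect_eq)
  qed
  have fin: "finite {S \<in> subs l m. P (- wt l m S)}" by simp
  show ?thesis by (rule card_inj_on_le[OF inj img fin])
qed

lemma card_sym: "card {S \<in> subs l m. P (wt l m S)} = card {S \<in> subs l m. P (- wt l m S)}"
  using card_sym_le[of m P] card_sym_le[of m "\<lambda>x. P (- x)"] by simp

lemma wt_in: "S \<in> subs l m \<Longrightarrow> wt l m S \<in> {-(int m * (int l + 1) + 2 * int d)..int m * (int l + 1) + 2 * int d}"
  using wt_bounds[of S m] by auto

lemma img_span: "(EE ^^ d) ` span (fk ` subs l m) =
   span (\<Union>t\<in>{-(int m * (int l + 1) + 2 * int d)..int m * (int l + 1) + 2 * int d}. (EE ^^ d) ` VV m t)"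
  (is "_ = span (\<Union>t\<in>?I. _)")
proof -
  let ?Ed = "EE ^^ d"
  have "?Ed ` span (fk ` subs l m) = span (?Ed ` fk ` subs l m)" by (rule lin_span_image[OF EEpow_lin])
  also have "\<dots> = span (\<Union>t\<in>?I. ?Ed ` VV m t)"
  proof (rule span_eq[THEN iffD2], rule conjI)
    show "?Ed ` fk ` subs l m \<subseteq> span (\<Union>t\<in>?I. ?Ed ` VV m t)"
    proof
      fix y assume "y \<in> ?Ed ` fk ` subs l m"
      then obtain S where S: "S \<in> subs l m" "y = ?Ed (fk S)" by auto
      have "S \<in> At m (wt l m S)" using S unfolding At_def by simp
      then have "fk S \<in> VV m (wt l m S)" unfolding VV_def by (intro span_base imageI)
      then have "y \<in> ?Ed ` VV m (wt l m S)" using S by blast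
      moreover have "wt l m S \<in> ?I" using wt_in S by blast
      ultimately have "y \<in> (\<Union>t\<in>?I. ?Ed ` VV m t)" by blast
      then show "y \<in> span (\<Union>t\<in>?I. ?Ed ` VV m t)" by (rule span_base)
    qed
    show "(\<Union>t\<in>?I. ?Ed ` VV m t) \<subseteq> span (?Ed ` fk ` subs l m)"
    proof (rule UN_least)
      fix t assume "t \<in> ?I"
      have "?Ed ` VV m t = span (?Ed ` fk ` At m t)" unfolding VV_def by (rule lin_span_image[OF EEpow_lin])
      also have "\<dots> \<subseteq> span (?Ed ` fk ` subs l m)" by (rule span_mono) (auto simp: At_def)
      finally show "?Ed ` VV m t \<subseteq> span (?Ed ` fk ` subs l m)" .
    qed
  qed
  finally show ?thesis .
qed

lemma dim_img: "dim ((EE ^^ d) ` span (fk ` subs l m)) =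
   (\<Sum>t\<in>{-(int m * (int l + 1) + 2 * int d)..int m * (int l + 1) + 2 * int d}. dim ((EE ^^ d) ` VV m t))"
  unfolding img_span
proof (rule dim_direct_sum[where X = "fk ` Pow {1..l}" and \<beta> = "\<lambda>t. fk ` At m (t + 2 * int d)"])
  show "finite {-(int m * (int l + 1) + 2 * int d)..int m * (int l + 1) + 2 * int d}" by simp
  show "independent (fk ` Pow {1..l})" by (rule independent_Basis)
  fix t assume "t \<in> {-(int m * (int l + 1) + 2 * int d)..int m * (int l + 1) + 2 * int d}"
  show "fk ` At m (t + 2 * int d) \<subseteq> fk ` Pow {1..l}" by (rule image_mono[OF At_sub])
  have "(EE ^^ d) ` VV m t = span ((EE ^^ d) ` fk ` At m t)" unfolding VV_def by (rule lin_span_image[OF EEpow_lin])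
  moreover have "(EE ^^ d) ` VV m t \<subseteq> span (fk ` At m (t + 2 * int d))"
    using EEpow_VV unfolding VV_def by blast
  ultimately show "subspace ((EE ^^ d) ` VV m t) \<and> (EE ^^ d) ` VV m t \<subseteq> span (fk ` At m (t + 2 * int d))"
    by simp
next
  fix i j :: int assume "i \<noteq> j"
  have "At m (i + 2 * int d) \<inter> At m (j + 2 * int d) = {}" using \<open>i \<noteq> j\<close> unfolding At_def by auto
  moreover have "fk ` At m (i + 2 * int d) \<inter> fk ` At m (j + 2 * int d) = fk ` (At m (i + 2 * int d) \<inter> At m (j + 2 * int d))"
    by (rule inj_on_image_Int[OF basis_inj At_sub At_sub, symmetric])
  ultimately show "fk ` At m (i + 2 * int d) \<inter> fk ` At m (j + 2 * int d) = {}" by simp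
qed

lemma count:
  "(\<Sum>t\<in>{-(int m * (int l + 1) + 2 * int d)..int m * (int l + 1) + 2 * int d}.
      (if t + int d \<le> 0 then card (At m t) else card (At m (t + 2 * int d))))
   = card {S \<in> subs l m. wt l m S \<le> - int d} + card {S \<in> subs l m. wt l m S < - int d}"
  (is "(\<Sum>t\<in>?I. _) = _")
proof -
  define Lo where "Lo = {S \<in> subs l m. wt l m S \<le> - int d}"
  define Hi where "Hi = {S \<in> subs l m. int d < wt l m S}"
  have fLo: "finite Lo" "finite Hi" unfolding Lo_def Hi_def by simp_all
  have split: "(\<Sum>t\<in>?I. (if t + int d \<le> 0 then card (At m t) else card (At m (t + 2 * int d))))
    = (\<Sum>t\<in>?I. card {x. x \<in> Lo \<and> wt l m x = t}) + (\<Sum>t\<in>?I. card {x. x \<in> Hi \<and> wt l m x - 2 * int d = t})"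
    unfolding sum.distrib[symmetric]
  proof (rule sum.cong[OF refl])
    fix t assume "t \<in> ?I"
    show "(if t + int d \<le> 0 then card (At m t) else card (At m (t + 2 * int d)))
        = card {x. x \<in> Lo \<and> wt l m x = t} + card {x. x \<in> Hi \<and> wt l m x - 2 * int d = t}"
    proof (cases "t + int d \<le> 0")
      case True
      have e1: "{x. x \<in> Lo \<and> wt l m x = t} = At m t" unfolding Lo_def At_def using True by auto
      have e2: "{x. x \<in> Hi \<and> wt l m x - 2 * int d = t} = {}" unfolding Hi_def using True by auto
      show ?thesis unfolding if_P[OF True] e1 e2 by simp
    next
      case False
      have e1: "{x. x \<in> Lo \<and> wt l m x = t} = {}" unfolding Lo_def using False by auto
      have e2: "{x. x \<in> Hi \<and> wt l m x - 2 * int d = t} = At m (t + 2 * int d)"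
        unfolding Hi_def At_def using False by auto
      show ?thesis unfolding if_not_P[OF False] e1 e2 by simp
    qed
  qed
  have g1: "(\<Sum>t\<in>?I. card {x. x \<in> Lo \<and> wt l m x = t}) = card Lo"
  proof -
    have "wt l m ` Lo \<subseteq> ?I" using wt_in unfolding Lo_def by blast
    from sum.group[OF fLo(1) _ this, of "\<lambda>_. 1::nat"] show ?thesis by simp
  qed
  have g2: "(\<Sum>t\<in>?I. card {x. x \<in> Hi \<and> wt l m x - 2 * int d = t}) = card Hi"
  proof -
    have "(\<lambda>x. wt l m x - 2 * int d) ` Hi \<subseteq> ?I"
    proof
      fix y assume "y \<in> (\<lambda>x. wt l m x - 2 * int d) ` Hi"
      then obtain x where x: "x \<in> Hi" "y = wt l m x - 2 * int d" by auto
      then have "x \<in> subs l m" "int d < wt l m x" unfolding Hi_def by auto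
      then show "y \<in> ?I" using wt_bounds[of x m] x(2) by auto
    qed
    from sum.group[OF fLo(2) _ this, of "\<lambda>_. 1::nat"] show ?thesis by simp
  qed
  have "card Hi = card {S \<in> subs l m. wt l m S < - int d}"
  proof -
    have "{S \<in> subs l m. int d < - wt l m S} = {S \<in> subs l m. wt l m S < - int d}" by auto
    then show ?thesis unfolding Hi_def using card_sym[of m "\<lambda>x. int d < x"] by simp
  qed
  then show ?thesis using split g1 g2 Lo_def by simp
qed

lemma ker_dim: "dim (kerMpow scale l m b b' d) + card {S \<in> subs l m. wt l m S \<le> - int d}
    + card {S \<in> subs l m. wt l m S < - int d} = card (subs l m)"
proof -
  have "dim (Vsp scale l m b b') = dim {x \<in> Vsp scale l m b b'. (EE ^^ d) x = 0} + dim ((EE ^^ d) ` Vsp scale l m b b')"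
    by (rule rank_nullity[OF subspace_Vsp EEpow_lin])
  moreover have "dim (Vsp scale l m b b') = card (subs l m)"
  proof -
    have sub: "subs l m \<subseteq> Pow {1..l}" unfolding subs_def by auto
    have "dim (Vsp scale l m b b') = card (fk ` subs l m)"
      unfolding Vsp_eq by (rule dim_span_eq_card_independent[OF indep_sub[OF sub]])
    also have "\<dots> = card (subs l m)" using card_image inj_on_subset[OF basis_inj sub] by blast
    finally show ?thesis .
  qed
  moreover have "{x \<in> Vsp scale l m b b'. (EE ^^ d) x = 0} = kerMpow scale l m b b' d"
    unfolding kerMpow_def by simp
  moreover have "dim ((EE ^^ d) ` Vsp scale l m b b') =
      card {S \<in> subs l m. wt l m S \<le> - int d} + card {S \<in> subs l m. wt l m S < - int d}"
    unfolding Vsp_eq dim_img rank_VV count[symmetric] ..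
  ultimately show ?thesis by simp
qed

end

context fock begin

theorem main_loc:
  assumes d: "1 \<le> d" and m: "m \<le> l"
  shows "int (dim (kerMpow scale l m b b' d)) - int (dim (kerMpow scale l m b b' (d - 1)))
         = (let e = (int m * (int l - int m) - (int d - 1)) div 2
            in if e < 0 then 0 else poly.coeff (qbinom l m) (nat e))"
proof -
  define e where "e = (int m * (int l - int m) - (int d - 1)) div 2"
  have k1: "dim (kerMpow scale l m b b' d) + card {S \<in> subs l m. wt l m S \<le> - int d}
    + card {S \<in> subs l m. wt l m S < - int d} = card (subs l m)" by (rule ker_dim)
  have k0: "dim (kerMpow scale l m b b' (d - 1)) + card {S \<in> subs l m. wt l m S \<le> - int (d - 1)}
    + card {S \<in> subs l m. wt l m S < - int (d - 1)} = card (subs l m)" by (rule ker_dim)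
  have dd: "int (d - 1) = int d - 1" using d by simp
  have U1: "{S \<in> subs l m. wt l m S \<le> - int (d - 1)} = {S \<in> subs l m. wt l m S \<le> - int d} \<union> {S \<in> subs l m. wt l m S = 1 - int d}"
    unfolding dd by auto
  have U2: "{S \<in> subs l m. wt l m S < - int (d - 1)} = {S \<in> subs l m. wt l m S < - int d} \<union> {S \<in> subs l m. wt l m S = - int d}"
    unfolding dd by auto
  have c1: "card {S \<in> subs l m. wt l m S \<le> - int (d - 1)} = card {S \<in> subs l m. wt l m S \<le> - int d} + card {S \<in> subs l m. wt l m S = 1 - int d}"
    unfolding U1 by (rule card_Un_disjoint) auto
  have c2: "card {S \<in> subs l m. wt l m S < - int (d - 1)} = card {S \<in> subs l m. wt l m S < - int d} + card {S \<in> subs l m. wt l m S = - int d}"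
    unfolding U2 by (rule card_Un_disjoint) auto
  have U3: "{S \<in> subs l m. wt l m S = 1 - int d \<or> wt l m S = - int d} = {S \<in> subs l m. wt l m S = 1 - int d} \<union> {S \<in> subs l m. wt l m S = - int d}"
    by auto
  have c3: "card {S \<in> subs l m. wt l m S = 1 - int d \<or> wt l m S = - int d} = card {S \<in> subs l m. wt l m S = 1 - int d} + card {S \<in> subs l m. wt l m S = - int d}"
    unfolding U3 by (rule card_Un_disjoint) auto
  have diff: "int (dim (kerMpow scale l m b b' d)) - int (dim (kerMpow scale l m b b' (d - 1)))
     = int (card {S \<in> subs l m. wt l m S = 1 - int d \<or> wt l m S = - int d})"
    using k1 k0 c1 c2 c3 by simp
  have T2: "2 * int (tri m) = int m * int m + int m" using tri2[of m] by (metis of_nat_mult of_nat_add of_nat_1 of_nat_numeral distrib_left mult.right_neutral)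
  have key: "(wt l m S = 1 - int d \<or> wt l m S = - int d) \<longleftrightarrow> int (\<Sum> S) - int (tri m) = e" for S
    unfolding wt_def e_def using arith_key[OF T2, of "int (\<Sum> S)" "int l" "int d"] by simp
  have setE: "{S \<in> subs l m. wt l m S = 1 - int d \<or> wt l m S = - int d} = {S \<in> subs l m. int (\<Sum> S) - int (tri m) = e}"
    using key by blast
  have lo: "tri m \<le> \<Sum> S" if "S \<in> subs l m" for S
  proof -
    have S: "S \<subseteq> {1..l}" "card S = m" using that unfolding subs_def by auto
    have "finite S" by (rule finite_subset[OF S(1)]) simp
    moreover have "0 \<notin> S" using S by auto
    ultimately show ?thesis using sum_lower S(2) by blast
  qed
  show ?thesis
  proof (cases "e < 0")
    case True
    have "{S \<in> subs l m. int (\<Sum> S) - int (tri m) = e} = {}"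
    proof (rule equals0I)
      fix S assume "S \<in> {S \<in> subs l m. int (\<Sum> S) - int (tri m) = e}"
      then have S: "S \<in> subs l m" "int (\<Sum> S) - int (tri m) = e" by auto
      have "tri m \<le> \<Sum> S" by (rule lo[OF S(1)])
      then have "0 \<le> e" using S(2) by linarith
      then show False using True by simp
    qed
    then show ?thesis using diff setE True unfolding e_def Let_def by simp
  next
    case False
    have "(int (\<Sum> S) - int (tri m) = e) = (\<Sum> S = nat e + tri m)" for S :: "nat set"
      using False by (auto simp del: of_nat_sum)
    then have "{S \<in> subs l m. int (\<Sum> S) - int (tri m) = e} = {S \<in> subs l m. \<Sum> S = nat e + tri m}"
      by simp
    then have "int (card {S \<in> subs l m. int (\<Sum> S) - int (tri m) = e}) = poly.coeff (qbinom l m) (nat e)"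
      using coeff_qbinom[OF m, of "nat e"] by simp
    then show ?thesis using diff setE False unfolding e_def Let_def by simp
  qed
qed

end

theorem corollary1:
  fixes scale :: "complex \<Rightarrow> 'v::ab_group_add \<Rightarrow> 'v"
    and b b' :: "nat \<Rightarrow> 'v \<Rightarrow> 'v" and r :: 'v and l m d :: nat
  assumes vs: "vector_space scale"
    and lin_b: "\<And>k. k \<in> {1..l} \<Longrightarrow> Vector_Spaces.linear scale scale (b k)"
    and lin_b': "\<And>k. k \<in> {1..l} \<Longrightarrow> Vector_Spaces.linear scale scale (b' k)"
    and car_bb: "\<And>j k \<psi>. j \<in> {1..l} \<Longrightarrow> k \<in> {1..l} \<Longrightarrow> b j (b k \<psi>) + b k (b j \<psi>) = 0"
    and car_b'b': "\<And>j k \<psi>. j \<in> {1..l} \<Longrightarrow> k \<in> {1..l} \<Longrightarrow> b' j (b' k \<psi>) + b' k (b' j \<psi>) = 0"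
    and car_bb': "\<And>j k \<psi>. j \<in> {1..l} \<Longrightarrow> k \<in> {1..l} \<Longrightarrow>
                    b j (b' k \<psi>) + b' k (b j \<psi>) = (if j = k then \<psi> else 0)"
    and vac: "\<And>k. k \<in> {1..l} \<Longrightarrow> b k r = 0"
    and basis_inj: "inj_on (fock_vec b' r) (Pow {1..l})"
    and basis_indep: "\<not> module.dependent scale (fock_vec b' r ` Pow {1..l})"
    and basis_span: "module.span scale (fock_vec b' r ` Pow {1..l}) = UNIV"
    and l: "1 \<le> l" and m: "m \<le> l" and d: "1 \<le> d"
  shows "int (vector_space.dim scale (kerMpow scale l m b b' d))
           - int (vector_space.dim scale (kerMpow scale l m b b' (d - 1)))
         = (let e = (int m * (int l - int m) - (int d - 1)) div 2
            in if e < 0 then 0 else poly.coeff (qbinom l m) (nat e))"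
proof -
  have fd: "finite_dimensional_vector_space scale (fock_vec b' r ` Pow {1..l})"
    unfolding finite_dimensional_vector_space_def finite_dimensional_vector_space_axioms_def
    using vs basis_indep basis_span by simp
  have fa: "fock_axioms scale b b' r l"
    by (rule fock_axioms.intro[OF lin_b lin_b' car_bb car_b'b' car_bb' vac basis_inj])
  interpret F: fock scale b b' r l by (rule fock.intro[OF fd fa])
  show ?thesis using F.main_loc[OF d m] by simp
qed

end
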